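(* With notation as in the context, for all $v,w\in G\backslash H$, $$d(\gamma_1(v),\gamma_1(w))=\begin{cases} dd(v,w)-2 & \text{if } v,w \text{ are } L \text{ cosets of opposite colors (one in } \mathscr{O}_1, \text{ the other in } \mathscr{O}_2),\\ dd(v,w) & \text{otherwise.}\end{cases}$$
   Context: Group $H$ side. $G\backslash H$ is the set of 56 right cosets of $G\cong W(E_6)$ in $H\cong W(E_7)$ (concretely, $H\subset GL(8,\mathbb{C})$ generated by the coordinate transpositions $(23),\dots,(78)$ and two explicit matrices; only the indexing below is needed). The cosets are indexed $\pm v(i,j)$, $0\le i<j\le7$. Associate the vector $\pm v(i,j)=\pm\big(4(\vec e_{i+1}+\vec e_{j+1})-\sum_{k=1}^8\vec e_k\big)\in\mathbb{Z}^8$ and define $dd(v,w)=\frac1{16}\sum_{k=1}^8(v_k-w_k)^2$. Blue $L$ cosets $\mathscr{O}_1=\{v(0,j),-v(1,j):2\le j\le7\}$, red $L$ cosets $\mathscr{O}_2=\{v(1,j),-v(0,j):2\le j\le7\}$, $J$ cosets $\mathscr{O}_3=\{\pm v(0,1)\}\cup\{\pm v(i,j):2\le i<j\le7\}$. Group $H_1$ side. Let $V=\{(A,B,C,D,E,F,G)^T\in\mathbb{C}^7:E+F+G-A-B-C-D=1\}$; let $X_1$ have rows $e_1$, $-e_3+e_5$, $-e_2+e_5$, $e_4$, $e_5$, $-e_2-e_3+e_5+e_6$, $-e_2-e_3+e_5+e_7$; $H_1=\langle(12),(23),(34),(56),(67),X_1\rangle\subset GL(7,\mathbb{C})$ ($\cong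 W(D_6)$), $G_J=\langle(23),(34),(56),(67),X_1\rangle$, $G_L=\langle(12),(23),(34),(67),(57)X_1(57)\rangle$. Let $Z_1$ be the unique non-identity central element of $H_1$; on $V$, $Z_1\vec x=(1-A,1-B,1-C,1-D,2-E,2-F,2-G)^T$. $J$-coset labels: the first coordinate of $\alpha\vec x$ determines $G_J\alpha$; with $(A_0,\dots,A_3)=(A,B,C,D)$, $(E_0,\dots,E_3)=(1,E,F,G)$ it is $1+A_r-E_q$ (label: the string $b_rb_q$, where $b_0={+}{+}{+},b_1={+}{-}{-},b_2={-}{+}{-},b_3={-}{-}{+}$) or $E_q-A_r$ (label: the negation of $b_rb_q$). $L$-coset labels: the coset labeled $\sigma$ is $G_L\beta_\sigma$ with $\beta_\sigma\vec x=u_\sigma$ on $V$, where $u_6=(A,B,C,D,G,F,E)$, $u_5=(A,B,C,D,F,E,G)$, $u_4=(A,B,C,D,E,F,G)$, $u_3=(A,1+A-E,1+A-F,1+A-G,1+A-D,1+A-B,1+A-C)$, $u_2=(A,1+A-E,1+A-F,1+A-G,1+A-C,1+A-B,1+A-D)$, $u_1=(A,1+A-E,1+A-F,1+A-G,1+A-B,1+A-C,1+A-D)$, and $u_{\overline k}=Z_1u_k$ for $1\le k\le 6$. Let $T=(G_L\backslash H_1)\cup(G_J\backslash H_1)$ (44 elements). Two elements of $T$ are opposite if some element of one equals $Z_1$ times some element of the other. The distance $d$ on $T$: $d(\sigma_1,\sigma_2)=0$ if $\sigma_1=\sigma_2$; if $\sigma_1\ne\sigma_2$ are both $J$ cosets,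 $d$ is the Hamming distance of their sign strings; if at least one is an $L$ coset (and $\sigma_1\neq\sigma_2$), $d=4$ if they are opposite and $d=2$ otherwise. The map $\gamma_1:G\backslash H\to T$: $\gamma_1(v(0,j))=\gamma_1(v(1,j))=$ the $L$ coset labeled $j-1$, $\gamma_1(-v(1,j))=\gamma_1(-v(0,j))=$ the $L$ coset labeled $\overline{j-1}$ ($2\le j\le7$); $\gamma_1(\pm v(0,1))$ is the $J$ coset with string ${\pm}{\pm}{\pm}{\pm}{\pm}{\pm}$ (all signs equal to the given sign); for $2\le i<j\le7$, $\gamma_1(v(i,j))$ is the $J$ coset whose string has plus signs in positions $i-1,j-1$ and minus signs elsewhere, and $\gamma_1(-v(i,j))$ the one with the negated string. *)

theory Defs
  imports "HOL-Analysis.Analysis"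
begin

text \<open>A coset index (s,i,j) stands for +v(i,j) if s, and -v(i,j) otherwise, 0 \<le> i < j \<le> 7.\<close>
type_synonym cidx = "bool \<times> nat \<times> nat"

definition cosets56 :: "cidx set" where
  "cosets56 = {(s,i,j). i < j \<and> j \<le> 7}"

text \<open>Coordinate k (0-based, k < 8) of the vector attached to the index:
  +-(4(e_(i+1)+e_(j+1)) - sum_k e_k).\<close>
definition cvec :: "cidx \<Rightarrow> nat \<Rightarrow> int" where
  "cvec v k = (case v of (s,i,j) \<Rightarrow>
      (if s then 1 else -1) * (4 * ((if k = i then 1 else 0) + (if k = j then 1 else 0)) - 1))"

definition dd :: "cidx \<Rightarrow> cidx \<Rightarrow> real" where
  "dd v w = (1/16) * (\<Sum>k<8. real_of_int ((cvec v k - cvec w k)^2))"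

definition O1 :: "cidx set" where
  "O1 = {(True,0,j) | j. 2 \<le> j \<and> j \<le> 7} \<union> {(False,1,j) | j. 2 \<le> j \<and> j \<le> 7}"

definition O2 :: "cidx set" where
  "O2 = {(True,1,j) | j. 2 \<le> j \<and> j \<le> 7} \<union> {(False,0,j) | j. 2 \<le> j \<and> j \<le> 7}"

definition O3 :: "cidx set" where
  "O3 = {(True,0,1), (False,0,1)} \<union> {(s,i,j) | s i j. 2 \<le> i \<and> i < j \<and> j \<le> 7}"

text \<open>Coordinates 1..7 of C^7 are the numerals 1,...,7 of the index type 7
  (these are 7 distinct elements; 7 = 0 in that type). A,B,C,D,E,F,G are coordinates 1..7.\<close>
type_synonym mat7 = "complex^7^7"
type_synonym vec7 = "complex^7"

definition mk7 :: "complex \<Rightarrow> complex \<Rightarrow> complex \<Rightarrow> complex \<Rightarrow> complex \<Rightarrow> complex \<Rightarrow> complex \<Rightarrow> vec7" where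
  "mk7 a b c d e f g = (\<chi> i. if i = 1 then a else if i = 2 then b else if i = 3 then c
      else if i = 4 then d else if i = 5 then e else if i = 6 then f else g)"

definition evec :: "7 \<Rightarrow> vec7" where
  "evec k = (\<chi> i. if i = k then 1 else 0)"

definition tmat :: "7 \<Rightarrow> 7 \<Rightarrow> mat7" where
  "tmat a b = (\<chi> r c. if c = (if r = a then b else if r = b then a else r) then 1 else 0)"

definition X1 :: mat7 where
  "X1 = (\<chi> r. if r = 1 then evec 1
          else if r = 2 then evec 5 - evec 3
          else if r = 3 then evec 5 - evec 2
          else if r = 4 then evec 4
          else if r = 5 then evec 5
          else if r = 6 then evec 5 + evec 6 - evec 2 - evec 3
          else evec 5 + evec 7 - evec 2 - evec 3)"

inductive_set gen_grp :: "mat7 set \<Rightarrow> mat7 set" for S where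
  one: "mat 1 \<in> gen_grp S"
| base: "a \<in> S \<Longrightarrow> a \<in> gen_grp S"
| inv: "a \<in> S \<Longrightarrow> matrix_inv a \<in> gen_grp S"
| mult: "a \<in> gen_grp S \<Longrightarrow> b \<in> gen_grp S \<Longrightarrow> a ** b \<in> gen_grp S"

definition H1 :: "mat7 set" where
  "H1 = gen_grp {tmat 1 2, tmat 2 3, tmat 3 4, tmat 5 6, tmat 6 7, X1}"

definition GJ :: "mat7 set" where
  "GJ = gen_grp {tmat 2 3, tmat 3 4, tmat 5 6, tmat 6 7, X1}"

definition GL :: "mat7 set" where
  "GL = gen_grp {tmat 1 2, tmat 2 3, tmat 3 4, tmat 6 7, tmat 5 7 ** X1 ** tmat 5 7}"

definition Vset :: "vec7 set" where
  "Vset = {x. x$5 + x$6 + x$7 - x$1 - x$2 - x$3 - x$4 = 1}"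

definition Z1 :: mat7 where
  "Z1 = (THE z. z \<in> H1 \<and> z \<noteq> mat 1 \<and> (\<forall>g\<in>H1. g ** z = z ** g))"

definition rcos :: "mat7 set \<Rightarrow> mat7 \<Rightarrow> mat7 set" where
  "rcos K a = (\<lambda>g. g ** a) ` K"

definition Jcosets :: "mat7 set set" where
  "Jcosets = rcos GJ ` H1"

definition Lcosets :: "mat7 set set" where
  "Lcosets = rcos GL ` H1"

definition Tset :: "mat7 set set" where
  "Tset = Lcosets \<union> Jcosets"

text \<open>A J label (p,r,q), r,q \<in> {0..3}: p = True means first coordinate 1 + A_r - E_q,
  label string b_r b_q; p = False means E_q - A_r, label the negated string.\<close>
type_synonym jlab = "bool \<times> nat \<times> nat"

definition valid_jlab :: "jlab \<Rightarrow> bool" where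
  "valid_jlab l = (case l of (p,r,q) \<Rightarrow> r \<le> 3 \<and> q \<le> 3)"

definition Acoord :: "nat \<Rightarrow> vec7 \<Rightarrow> complex" where
  "Acoord r x = x $ (of_nat (r + 1))"

definition Ecoord :: "nat \<Rightarrow> vec7 \<Rightarrow> complex" where
  "Ecoord q x = (if q = 0 then 1 else x $ (of_nat (q + 4)))"

definition jfun :: "jlab \<Rightarrow> vec7 \<Rightarrow> complex" where
  "jfun l x = (case l of (p,r,q) \<Rightarrow>
     if p then 1 + Acoord r x - Ecoord q x else Ecoord q x - Acoord r x)"

text \<open>Sign strings as bool lists (True = +).\<close>
definition bstr :: "nat \<Rightarrow> bool list" where
  "bstr r = (if r = 0 then [True,True,True] else if r = 1 then [True,False,False]
             else if r = 2 then [False,True,False] else [False,False,True])"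

definition jstring :: "jlab \<Rightarrow> bool list" where
  "jstring l = (case l of (p,r,q) \<Rightarrow> if p then bstr r @ bstr q else map Not (bstr r @ bstr q))"

definition Jcoset :: "jlab \<Rightarrow> mat7 set" where
  "Jcoset l = {\<alpha> \<in> H1. \<forall>x\<in>Vset. (\<alpha> *v x) $ 1 = jfun l x}"

definition Jcoset_of_string :: "bool list \<Rightarrow> mat7 set" where
  "Jcoset_of_string s = Jcoset (THE l. valid_jlab l \<and> jstring l = s)"

definition jstr_of :: "mat7 set \<Rightarrow> bool list" where
  "jstr_of \<sigma> = (SOME s. \<exists>l. valid_jlab l \<and> \<sigma> = Jcoset l \<and> s = jstring l)"

definition hamming :: "bool list \<Rightarrow> bool list \<Rightarrow> nat" where
  "hamming s t = length (filter (\<lambda>(a,b). a \<noteq> b) (zip s t))"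

text \<open>An L label (bar,k), 1 \<le> k \<le> 6: k if bar = False, overline k if bar = True.\<close>
definition ufun :: "nat \<Rightarrow> vec7 \<Rightarrow> vec7" where
  "ufun k x = (let A = x$1; B = x$2; C = x$3; D = x$4; E = x$5; F = x$6; G = x$7 in
     if k = 6 then mk7 A B C D G F E
     else if k = 5 then mk7 A B C D F E G
     else if k = 4 then mk7 A B C D E F G
     else if k = 3 then mk7 A (1+A-E) (1+A-F) (1+A-G) (1+A-D) (1+A-B) (1+A-C)
     else if k = 2 then mk7 A (1+A-E) (1+A-F) (1+A-G) (1+A-C) (1+A-B) (1+A-D)
     else mk7 A (1+A-E) (1+A-F) (1+A-G) (1+A-B) (1+A-C) (1+A-D))"

definition ulab :: "bool \<times> nat \<Rightarrow> vec7 \<Rightarrow> vec7" where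
  "ulab \<sigma> x = (case \<sigma> of (bar,k) \<Rightarrow> if bar then Z1 *v ufun k x else ufun k x)"

definition Lcoset :: "bool \<times> nat \<Rightarrow> mat7 set" where
  "Lcoset \<sigma> = rcos GL (THE \<beta>. \<beta> \<in> H1 \<and> (\<forall>x\<in>Vset. \<beta> *v x = ulab \<sigma> x))"

definition opposite :: "mat7 set \<Rightarrow> mat7 set \<Rightarrow> bool" where
  "opposite \<sigma>1 \<sigma>2 = (\<exists>a\<in>\<sigma>1. \<exists>b\<in>\<sigma>2. a = Z1 ** b)"

definition dT :: "mat7 set \<Rightarrow> mat7 set \<Rightarrow> nat" where
  "dT \<sigma>1 \<sigma>2 = (if \<sigma>1 = \<sigma>2 then 0
     else if \<sigma>1 \<in> Jcosets \<and> \<sigma>2 \<in> Jcosets then hamming (jstr_of \<sigma>1) (jstr_of \<sigma>2)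
     else if opposite \<sigma>1 \<sigma>2 then 4 else 2)"

definition gamma1 :: "cidx \<Rightarrow> mat7 set" where
  "gamma1 v = (case v of (s,i,j) \<Rightarrow>
     if i = 0 \<and> j = 1 then Jcoset_of_string (replicate 6 s)
     else if i \<le> 1 then
       (if (s \<and> i = 0) \<or> (s \<and> i = 1) then Lcoset (False, j - 1) else Lcoset (True, j - 1))
     else Jcoset_of_string
       (map (\<lambda>p. if p = i - 1 \<or> p = j - 1 then s else \<not> s) [1..<7]))"

end

theory Submission
  imports Defs
begin


lemma c: "card {1,2,3,4,5,6,7::7} = 7" by simp
lemma U7: "(UNIV::7 set) = {1,2,3,4,5,6,7}"
  by (rule sym, rule card_subset_eq[of "UNIV::7 set"]) (simp_all only: c finite_class.finite_UNIV subset_UNIV, simp)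
lemma all7: "(\<forall>i::7. P i) \<longleftrightarrow> P 1 \<and> P 2 \<and> P 3 \<and> P 4 \<and> P 5 \<and> P 6 \<and> P 7"
proof
  assume h: "P 1 \<and> P 2 \<and> P 3 \<and> P 4 \<and> P 5 \<and> P 6 \<and> P 7"
  show "\<forall>i. P i"
  proof
    fix i :: 7
    have "i \<in> {1,2,3,4,5,6,7}" by (subst U7[symmetric]) (rule UNIV_I)
    then have "i = 1 \<or> i = 2 \<or> i = 3 \<or> i = 4 \<or> i = 5 \<or> i = 6 \<or> i = 7" by (simp only: insert_iff empty_iff simp_thms)
    then show "P i" using h by (elim disjE) simp_all
  qed
qed (simp only: simp_thms)
lemma sum7: "sum f (UNIV::7 set) = f 1 + f 2 + f 3 + f 4 + f 5 + f 6 + f 7"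
  unfolding U7 apply (subst sum.insert, simp, simp)+ apply (simp add: add.assoc) done

definition pos :: "7 \<Rightarrow> nat" where
  "pos i = (if i = 1 then 0 else if i = 2 then 1 else if i = 3 then 2 else if i = 4 then 3
     else if i = 5 then 4 else if i = 6 then 5 else 6)"

lemma pos_simps[simp]: "pos 1 = 0" "pos 2 = 1" "pos 3 = 2" "pos 4 = 3" "pos 5 = 4" "pos 6 = 5" "pos 7 = 6"
  by (simp_all add: pos_def)

lemma pos_lt[simp]: "pos i < 7" by (simp add: pos_def)

lemma pos_inj: "pos i = pos j \<longleftrightarrow> i = j"
proof -
  have "\<forall>i j. pos i = pos j \<longrightarrow> i = j" by (simp only: all7 pos_simps) simp
  then show ?thesis by blast
qed

lemma sum_pos: "(\<Sum>i\<in>UNIV. f (pos i)) = (\<Sum>k<7. f k)"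
  by (simp add: sum7 eval_nat_numeral add.assoc)

definition toV :: "int list \<Rightarrow> vec7" where
  "toV xs = (\<chi> i. of_int (xs ! pos i))"

definition toM :: "int list list \<Rightarrow> mat7" where
  "toM M = (\<chi> i j. of_int (M ! pos i ! pos j))"

lemma toV_nth: "toV xs $ i = of_int (xs ! pos i)" by (simp add: toV_def)
lemma toM_nth: "toM M $ i $ j = of_int (M ! pos i ! pos j)" by (simp add: toM_def)

definition isum :: "(nat \<Rightarrow> int) \<Rightarrow> int" where
  "isum f = sum_list (map f [0..<7])"

lemma isum_eq: "isum f = (\<Sum>k<7. f k)"
  unfolding isum_def by (simp add: sum_set_upt_conv_sum_list_nat[symmetric] atLeast0LessThan)

definition imv :: "int list list \<Rightarrow> int list \<Rightarrow> int list" where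
  "imv A x = map (\<lambda>r. isum (\<lambda>k. A!r!k * x!k)) [0..<7]"
definition ivm :: "int list \<Rightarrow> int list list \<Rightarrow> int list" where
  "ivm x A = map (\<lambda>c. isum (\<lambda>k. x!k * A!k!c)) [0..<7]"
definition imul :: "int list list \<Rightarrow> int list list \<Rightarrow> int list list" where
  "imul A B = map (\<lambda>r. map (\<lambda>c. isum (\<lambda>k. A!r!k * B!k!c)) [0..<7]) [0..<7]"

lemma toM_mv: "toM A *v toV x = toV (imv A x)"
proof -
  have "(toM A *v toV x) $ i = toV (imv A x) $ i" for i
  proof -
    have "(toM A *v toV x) $ i = (\<Sum>j\<in>UNIV. of_int (A ! pos i ! pos j * x ! pos j))"
      by (simp add: matrix_vector_mult_def toM_nth toV_nth)
    also have "\<dots> = of_int (\<Sum>j\<in>UNIV. A ! pos i ! pos j * x ! pos j)" by simp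
    also have "\<dots> = of_int (\<Sum>k<7. A ! pos i ! k * x ! k)"
      using sum_pos[of "\<lambda>k. A ! pos i ! k * x ! k"] by simp
    finally show ?thesis by (simp add: toV_nth imv_def isum_eq)
  qed
  then show ?thesis by (simp add: vec_eq_iff)
qed

lemma toM_vm: "toV x v* toM A = toV (ivm x A)"
proof -
  have "(toV x v* toM A) $ i = toV (ivm x A) $ i" for i
  proof -
    have "(toV x v* toM A) $ i = (\<Sum>j\<in>UNIV. of_int (x ! pos j * A ! pos j ! pos i))"
      by (simp add: vector_matrix_mult_def toM_nth toV_nth)
    also have "\<dots> = of_int (\<Sum>j\<in>UNIV. x ! pos j * A ! pos j ! pos i)" by simp
    also have "\<dots> = of_int (\<Sum>k<7. x ! k * A ! k ! pos i)"
      using sum_pos[of "\<lambda>k. x ! k * A ! k ! pos i"] by simp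
    finally show ?thesis by (simp add: toV_nth ivm_def isum_eq)
  qed
  then show ?thesis by (simp add: vec_eq_iff)
qed

lemma toM_mul: "toM A ** toM B = toM (imul A B)"
proof -
  have "(toM A ** toM B) $ i $ j = toM (imul A B) $ i $ j" for i j
  proof -
    have "(toM A ** toM B) $ i $ j = (\<Sum>k\<in>UNIV. of_int (A ! pos i ! pos k * B ! pos k ! pos j))"
      by (simp add: matrix_matrix_mult_def toM_nth)
    also have "\<dots> = of_int (\<Sum>k\<in>UNIV. A ! pos i ! pos k * B ! pos k ! pos j)" by simp
    also have "\<dots> = of_int (\<Sum>k<7. A ! pos i ! k * B ! k ! pos j)"
      using sum_pos[of "\<lambda>k. A ! pos i ! k * B ! k ! pos j"] by simp
    finally show ?thesis by (simp add: toM_nth imul_def isum_eq)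
  qed
  then show ?thesis by (simp add: vec_eq_iff)
qed


lemma less7: "k < (7::nat) \<Longrightarrow> k = 0 \<or> k = 1 \<or> k = 2 \<or> k = 3 \<or> k = 4 \<or> k = 5 \<or> k = 6"
  by arith

lemma toV_eq: "(\<And>k. k < 7 \<Longrightarrow> a ! k = b ! k) \<Longrightarrow> toV a = toV b"
  by (simp add: toV_def vec_eq_iff)

lemma pos_surj: "k < 7 \<Longrightarrow> \<exists>i. pos i = k"
  using less7[of k] pos_simps by metis

lemma toV_inj: "length a = 7 \<Longrightarrow> length b = 7 \<Longrightarrow> toV a = toV b \<Longrightarrow> a = b"
proof (rule nth_equalityI)
  assume l: "length a = 7" "length b = 7" and e: "toV a = toV b"
  show "length a = length b" using l by simp
  fix k assume "k < length a"
  then obtain i where i: "pos i = k" using pos_surj l by auto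
  have "toV a $ i = toV b $ i" using e by simp
  then show "a ! k = b ! k" using i by (simp add: toV_nth)
qed

definition I7 :: "int list list" where
  "I7 = [[1,0,0,0,0,0,0],[0,1,0,0,0,0,0],[0,0,1,0,0,0,0],[0,0,0,1,0,0,0],[0,0,0,0,1,0,0],[0,0,0,0,0,1,0],[0,0,0,0,0,0,1]]"

definition Gi :: "nat \<Rightarrow> int list list" where
  "Gi n = (if n = 0 then [[0,1,0,0,0,0,0],[1,0,0,0,0,0,0],[0,0,1,0,0,0,0],[0,0,0,1,0,0,0],[0,0,0,0,1,0,0],[0,0,0,0,0,1,0],[0,0,0,0,0,0,1]]
    else if n = 1 then [[1,0,0,0,0,0,0],[0,0,1,0,0,0,0],[0,1,0,0,0,0,0],[0,0,0,1,0,0,0],[0,0,0,0,1,0,0],[0,0,0,0,0,1,0],[0,0,0,0,0,0,1]]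
    else if n = 2 then [[1,0,0,0,0,0,0],[0,1,0,0,0,0,0],[0,0,0,1,0,0,0],[0,0,1,0,0,0,0],[0,0,0,0,1,0,0],[0,0,0,0,0,1,0],[0,0,0,0,0,0,1]]
    else if n = 3 then [[1,0,0,0,0,0,0],[0,1,0,0,0,0,0],[0,0,1,0,0,0,0],[0,0,0,1,0,0,0],[0,0,0,0,0,1,0],[0,0,0,0,1,0,0],[0,0,0,0,0,0,1]]
    else if n = 4 then [[1,0,0,0,0,0,0],[0,1,0,0,0,0,0],[0,0,1,0,0,0,0],[0,0,0,1,0,0,0],[0,0,0,0,1,0,0],[0,0,0,0,0,0,1],[0,0,0,0,0,1,0]]
    else if n = 5 then [[1,0,0,0,0,0,0],[0,0,-1,0,1,0,0],[0,-1,0,0,1,0,0],[0,0,0,1,0,0,0],[0,0,0,0,1,0,0],[0,-1,-1,0,1,1,0],[0,-1,-1,0,1,0,1]]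
    else if n = 6 then [[1,0,0,0,0,0,0],[0,0,-1,0,0,0,1],[0,-1,0,0,0,0,1],[0,0,0,1,0,0,0],[0,-1,-1,0,1,0,1],[0,-1,-1,0,0,1,1],[0,0,0,0,0,0,1]]
    else I7)"

definition P57 :: "int list list" where
  "P57 = [[1,0,0,0,0,0,0],[0,1,0,0,0,0,0],[0,0,1,0,0,0,0],[0,0,0,1,0,0,0],[0,0,0,0,0,0,1],[0,0,0,0,0,1,0],[0,0,0,0,1,0,0]]"

definition gmat :: "nat \<Rightarrow> mat7" where
  "gmat n = (if n = 0 then tmat 1 2 else if n = 1 then tmat 2 3 else if n = 2 then tmat 3 4
     else if n = 3 then tmat 5 6 else if n = 4 then tmat 6 7 else if n = 5 then X1
     else if n = 6 then tmat 5 7 ** X1 ** tmat 5 7 else mat 1)"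

lemma mat1_toM: "mat 1 = toM I7"
  by (simp add: vec_eq_iff all7 mat_def toM_nth I7_def)

lemma tmat_toM:
  "tmat 1 2 = toM (Gi 0)" "tmat 2 3 = toM (Gi 1)" "tmat 3 4 = toM (Gi 2)"
  "tmat 5 6 = toM (Gi 3)" "tmat 6 7 = toM (Gi 4)" "tmat 5 7 = toM P57"
  by (simp_all add: vec_eq_iff all7 tmat_def toM_nth Gi_def P57_def)

lemma X1_toM: "X1 = toM (Gi 5)"
  by (simp add: vec_eq_iff all7 X1_def evec_def toM_nth Gi_def)

lemma Y_toM: "tmat 5 7 ** X1 ** tmat 5 7 = toM (Gi 6)"
  unfolding tmat_toM X1_toM toM_mul
  by (simp add: imul_def isum_def P57_def Gi_def upt_rec)

lemma gmat_toM: "gmat n = toM (Gi n)"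
  unfolding gmat_def Y_toM by (simp add: tmat_toM X1_toM mat1_toM Gi_def)

fun gact :: "nat \<Rightarrow> int list \<Rightarrow> int list" where
  "gact n [a,b,c,d,e,f,g] = (if n = 0 then [b,a,c,d,e,f,g]
    else if n = 1 then [a,c,b,d,e,f,g]
    else if n = 2 then [a,b,d,c,e,f,g]
    else if n = 3 then [a,b,c,d,f,e,g]
    else if n = 4 then [a,b,c,d,e,g,f]
    else if n = 5 then [a, e-c, e-b, d, e, e+f-b-c, e+g-b-c]
    else if n = 6 then [a, g-c, g-b, d, g+e-b-c, g+f-b-c, g]
    else [a,b,c,d,e,f,g])"
| "gact n xs = xs"

fun ract :: "nat \<Rightarrow> int list \<Rightarrow> int list" where
  "ract n [a,b,c,d,e,f,g] = (if n = 0 then [b,a,c,d,e,f,g]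
    else if n = 1 then [a,c,b,d,e,f,g]
    else if n = 2 then [a,b,d,c,e,f,g]
    else if n = 3 then [a,b,c,d,f,e,g]
    else if n = 4 then [a,b,c,d,e,g,f]
    else if n = 5 then [a, -c-f-g, -b-f-g, d, b+c+e+f+g, f, g]
    else if n = 6 then [a, -c-e-f, -b-e-f, d, e, f, b+c+e+f+g]
    else [a,b,c,d,e,f,g])"
| "ract n xs = xs"

lemma len7: "length x = 7 \<Longrightarrow> \<exists>a b c d e f g. x = [a,b,c,d,e,f,g]"
  by (simp add: length_Suc_conv eval_nat_numeral) blast

lemma gact_len: "length x = 7 \<Longrightarrow> length (gact n x) = 7"
  using len7[of x] by auto

lemma ract_len: "length x = 7 \<Longrightarrow> length (ract n x) = 7"
  using len7[of x] by auto

lemma gact_ok: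
  assumes "length x = 7" shows "gmat n *v toV x = toV (gact n x)"
proof -
  obtain a b c d e f g where x: "x = [a,b,c,d,e,f,g]" using len7[OF assms] by blast
  show ?thesis unfolding gmat_toM toM_mv x
    by (rule toV_eq, drule less7) (auto simp: imv_def isum_def Gi_def I7_def upt_rec eval_nat_numeral)
qed

lemma ract_ok:
  assumes "length r = 7" shows "toV r v* gmat n = toV (ract n r)"
proof -
  obtain a b c d e f g where x: "r = [a,b,c,d,e,f,g]" using len7[OF assms] by blast
  show ?thesis unfolding gmat_toM toM_vm x
    by (rule toV_eq, drule less7) (auto simp: ivm_def isum_def Gi_def I7_def upt_rec eval_nat_numeral)
qed

primrec wmat :: "nat list \<Rightarrow> mat7" where
  "wmat [] = mat 1"
| "wmat (n#w) = gmat n ** wmat w"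

primrec wact :: "nat list \<Rightarrow> int list \<Rightarrow> int list" where
  "wact [] x = x"
| "wact (n#w) x = gact n (wact w x)"

primrec wract :: "nat list \<Rightarrow> int list \<Rightarrow> int list" where
  "wract [] r = r"
| "wract (n#w) r = wract w (ract n r)"

lemma wmat_append: "wmat (u @ v) = wmat u ** wmat v"
  by (induction u) (simp_all add: matrix_mul_assoc)

lemma wact_len: "length x = 7 \<Longrightarrow> length (wact w x) = 7"
  by (induction w) (simp_all add: gact_len)

lemma wract_len: "length x = 7 \<Longrightarrow> length (wract w x) = 7"
  by (induction w arbitrary: x) (simp_all add: ract_len)

lemma wact_ok: "length x = 7 \<Longrightarrow> wmat w *v toV x = toV (wact w x)"
  by (induction w) (simp_all add: matrix_vector_mul_assoc[symmetric] gact_ok wact_len)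

lemma wract_ok: "length r = 7 \<Longrightarrow> toV r v* wmat w = toV (wract w r)"
  by (induction w arbitrary: r) (simp_all add: vector_matrix_mul_assoc[symmetric] ract_ok ract_len)

definition unitv :: "nat \<Rightarrow> int list" where
  "unitv k = map (\<lambda>i. if i = k then 1 else 0) [0..<7]"

lemma unitv_nth: "i < 7 \<Longrightarrow> unitv k ! i = (if i = k then 1 else 0)"
  by (simp add: unitv_def)

lemma mat_eq_units:
  fixes A B :: mat7
  assumes "\<And>k. k < 7 \<Longrightarrow> A *v toV (unitv k) = B *v toV (unitv k)"
  shows "A = B"
proof -
  have col: "(M *v toV (unitv (pos j))) $ i = M $ i $ j" for M :: mat7 and i j
  proof -
    have "(M *v toV (unitv (pos j))) $ i = (\<Sum>m\<in>UNIV. M $ i $ m * complex_of_int (if m = j then 1 else 0))"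
      by (simp add: matrix_vector_mult_def toV_nth unitv_nth pos_inj)
    also have "\<dots> = M $ i $ j" by (simp add: if_distrib cong: if_cong)
    finally show ?thesis .
  qed
  have "A $ i $ j = B $ i $ j" for i j
    using col[of A j i] col[of B j i] assms[OF pos_lt[of j]] by simp
  then show ?thesis by (simp add: vec_eq_iff)
qed

definition units7 :: "int list list" where
  "units7 = [[1,0,0,0,0,0,0],[0,1,0,0,0,0,0],[0,0,1,0,0,0,0],[0,0,0,1,0,0,0],[0,0,0,0,1,0,0],[0,0,0,0,0,1,0],[0,0,0,0,0,0,1]]"

lemma units7_eq: "units7 = map unitv [0..<7]"
  by (simp add: units7_def unitv_def upt_rec)

lemma unitv_len: "length (unitv k) = 7" by (simp add: unitv_def)

definition weq :: "nat list \<Rightarrow> nat list \<Rightarrow> bool" where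
  "weq u v = list_all (\<lambda>x. wact u x = wact v x) units7"

lemma weq_ok: "weq u v \<Longrightarrow> wmat u = wmat v"
  by (rule mat_eq_units) (simp add: weq_def units7_eq list_all_iff wact_ok unitv_len)

lemma row1_eq: "(toV (unitv 0) v* (A::mat7)) = A $ 1"
proof -
  have "(toV (unitv 0) v* A) $ j = A $ 1 $ j" for j
  proof -
    have "(toV (unitv 0) v* A) $ j = (\<Sum>i\<in>UNIV. complex_of_int (if i = 1 then 1 else 0) * A $ i $ j)"
      by (simp add: vector_matrix_mult_def toV_nth unitv_nth pos_inj[of _ 1, simplified])
    also have "\<dots> = (\<Sum>i\<in>UNIV. if i = 1 then A $ i $ j else 0)" by (rule sum.cong) auto
    also have "\<dots> = A $ 1 $ j" by simp
    finally show ?thesis .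
  qed
  then show ?thesis by (simp add: vec_eq_iff)
qed

lemma wmat_row1: "wmat w $ 1 = toV (wract w (unitv 0))"
  using row1_eq[of "wmat w"] wract_ok[of "unitv 0" w] by (simp add: unitv_len)


section \<open>Words and generated groups\<close>

lemma inv_self: "(a::mat7) ** a = mat 1 \<Longrightarrow> matrix_inv a = a"
proof -
  assume h: "a ** a = mat 1"
  have ex: "\<exists>A'. a ** A' = mat 1 \<and> A' ** a = mat 1" using h by blast
  define A' where "A' = matrix_inv a"
  have "a ** A' = mat 1 \<and> A' ** a = mat 1"
    unfolding A'_def matrix_inv_def by (rule someI_ex[OF ex])
  then have "A' = (a ** a) ** A'" using h by simp
  also have "\<dots> = a" using \<open>a ** A' = mat 1 \<and> A' ** a = mat 1\<close> by (simp add: matrix_mul_assoc[symmetric])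
  finally show ?thesis unfolding A'_def .
qed

lemma invol_chk: "list_all (\<lambda>n. weq [n,n] []) [0,1,2,3,4,5,6]" by code_simp

lemma gmat_invol: "n \<le> 6 \<Longrightarrow> gmat n ** gmat n = mat 1"
proof -
  assume "n \<le> 6"
  then have "n = 0 \<or> n = 1 \<or> n = 2 \<or> n = 3 \<or> n = 4 \<or> n = 5 \<or> n = 6" by arith
  then have "weq [n,n] []" using invol_chk by (elim disjE) simp_all
  from weq_ok[OF this] show ?thesis by simp
qed

lemma gen_grp_words:
  assumes "\<forall>n\<in>L. n \<le> 6"
  shows "gen_grp (gmat ` L) = {wmat w | w. set w \<subseteq> L}"
proof
  show "gen_grp (gmat ` L) \<subseteq> {wmat w | w. set w \<subseteq> L}"
  proof
    fix x assume "x \<in> gen_grp (gmat ` L)"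
    then show "x \<in> {wmat w | w. set w \<subseteq> L}"
    proof (induction rule: gen_grp.induct)
      case one
      then show ?case by (auto intro!: exI[of _ "[]"])
    next
      case (base a)
      then obtain n where "n \<in> L" "a = gmat n" by auto
      then show ?case by (auto intro!: exI[of _ "[n]"])
    next
      case (inv a)
      then obtain n where n: "n \<in> L" "a = gmat n" by auto
      then have "matrix_inv a = gmat n" using inv_self gmat_invol assms by auto
      then show ?case using n by (auto intro!: exI[of _ "[n]"])
    next
      case (mult a b)
      then obtain u v where "set u \<subseteq> L" "a = wmat u" "set v \<subseteq> L" "b = wmat v" by auto
      then show ?case by (auto intro!: exI[of _ "u @ v"] simp: wmat_append)
    qed
  qed
next
  show "{wmat w | w. set w \<subseteq> L} \<subseteq> gen_grp (gmat ` L)"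
  proof
    fix x assume "x \<in> {wmat w | w. set w \<subseteq> L}"
    then obtain w where w: "set w \<subseteq> L" "x = wmat w" by auto
    have "set w \<subseteq> L \<Longrightarrow> wmat w \<in> gen_grp (gmat ` L)"
    proof (induction w)
      case Nil
      then show ?case by (simp add: gen_grp.one)
    next
      case (Cons n w)
      have "gmat n \<in> gen_grp (gmat ` L)" by (rule gen_grp.base) (use Cons.prems in auto)
      moreover have "wmat w \<in> gen_grp (gmat ` L)" using Cons by auto
      ultimately show ?case by (simp add: gen_grp.mult)
    qed
    then show "x \<in> gen_grp (gmat ` L)" using w by simp
  qed
qed

lemma H1_eq: "H1 = {wmat w | w. set w \<subseteq> {0,1,2,3,4,5}}"
proof -
  have "{tmat 1 2, tmat 2 3, tmat 3 4, tmat 5 6, tmat 6 7, X1} = gmat ` {0,1,2,3,4,5}"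
    by (simp add: gmat_def insert_commute)
  then show ?thesis unfolding H1_def by (simp only:) (rule gen_grp_words, simp)
qed

lemma GJ_eq: "GJ = {wmat w | w. set w \<subseteq> {1,2,3,4,5}}"
proof -
  have "{tmat 2 3, tmat 3 4, tmat 5 6, tmat 6 7, X1} = gmat ` {1,2,3,4,5}"
    by (simp add: gmat_def insert_commute)
  then show ?thesis unfolding GJ_def by (simp only:) (rule gen_grp_words, simp)
qed

lemma GL_eq: "GL = {wmat w | w. set w \<subseteq> {0,1,2,4,6}}"
proof -
  have "{tmat 1 2, tmat 2 3, tmat 3 4, tmat 6 7, tmat 5 7 ** X1 ** tmat 5 7} = gmat ` {0,1,2,4,6}"
    by (simp add: gmat_def insert_commute)
  then show ?thesis unfolding GL_def by (simp only:) (rule gen_grp_words, simp)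
qed

lemma Y_word: "weq [6] [3,4,3,5,3,4,3]" by code_simp

lemma wmat_H1: "set w \<subseteq> {0,1,2,3,4,5,6} \<Longrightarrow> wmat w \<in> H1"
proof (induction w)
  case Nil
  then show ?case unfolding H1_eq by (auto intro!: exI[of _ "[]"])
next
  case (Cons n w)
  then obtain u where u: "set u \<subseteq> {0,1,2,3,4,5}" "wmat w = wmat u" unfolding H1_eq by auto
  show ?case
  proof (cases "n = 6")
    case True
    have "wmat (n # w) = wmat ([3,4,3,5,3,4,3] @ u)"
      using True u weq_ok[OF Y_word] by (simp add: wmat_append matrix_mul_assoc)
    then show ?thesis unfolding H1_eq using u by (intro CollectI exI[of _ "[3,4,3,5,3,4,3] @ u"]) auto
  next
    case False
    then have "wmat (n # w) = wmat (n # u)" using u by simp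
    then show ?thesis unfolding H1_eq using u Cons.prems False by (intro CollectI exI[of _ "n # u"]) auto
  qed
qed

lemma GJ_H1: "GJ \<subseteq> H1" unfolding GJ_eq using wmat_H1 by auto
lemma GL_H1: "GL \<subseteq> H1" unfolding GL_eq using wmat_H1 by auto

lemma H1_mult: "a \<in> H1 \<Longrightarrow> b \<in> H1 \<Longrightarrow> a ** b \<in> H1"
  unfolding H1_def by (rule gen_grp.mult)

lemma GJ_mult: "a \<in> GJ \<Longrightarrow> b \<in> GJ \<Longrightarrow> a ** b \<in> GJ"
  unfolding GJ_def by (rule gen_grp.mult)

lemma GL_mult: "a \<in> GL \<Longrightarrow> b \<in> GL \<Longrightarrow> a ** b \<in> GL"
  unfolding GL_def by (rule gen_grp.mult)


section \<open>The central element\<close>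

definition Zw :: "nat list" where "Zw = [0,1,3,4,3,5,0,2,1,3,4,5,0,2,3,4,5,0,2,3,5,2]"
definition Zm :: mat7 where "Zm = wmat Zw"
definition e1v :: vec7 where "e1v = toV (unitv 0)"

lemma Zw_set: "set Zw \<subseteq> {0,1,2,3,4,5}" by (simp add: Zw_def)
lemma Zm_H1: "Zm \<in> H1" unfolding Zm_def using wmat_H1 Zw_set by auto

lemma Z_comm_chk: "list_all (\<lambda>n. weq (Zw @ [n]) (n # Zw)) [0,1,2,3,4,5]" by code_simp

lemma Zm_comm_gen: "n \<in> {0,1,2,3,4,5} \<Longrightarrow> Zm ** gmat n = gmat n ** Zm"
proof -
  assume "n \<in> {0,1,2,3,4,5}"
  then have "weq (Zw @ [n]) (n # Zw)" using Z_comm_chk by auto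
  from weq_ok[OF this] show ?thesis by (simp add: Zm_def wmat_append)
qed

lemma Zm_comm_w: "set w \<subseteq> {0,1,2,3,4,5} \<Longrightarrow> Zm ** wmat w = wmat w ** Zm"
proof (induction w)
  case Nil then show ?case by simp
next
  case (Cons n w)
  then have "Zm ** wmat (n # w) = (Zm ** gmat n) ** wmat w" by (simp add: matrix_mul_assoc)
  also have "\<dots> = (gmat n ** Zm) ** wmat w" using Cons.prems Zm_comm_gen by simp
  also have "\<dots> = gmat n ** (Zm ** wmat w)" by (simp only: matrix_mul_assoc)
  also have "\<dots> = gmat n ** (wmat w ** Zm)" using Cons by simp
  also have "\<dots> = wmat (n # w) ** Zm" by (simp add: matrix_mul_assoc)
  finally show ?case .
qed

lemma Zm_central: "g \<in> H1 \<Longrightarrow> g ** Zm = Zm ** g"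
  unfolding H1_eq using Zm_comm_w by auto

lemma Zm_sq: "Zm ** Zm = mat 1"
proof -
  have "weq (Zw @ Zw) []" by code_simp
  from weq_ok[OF this] show ?thesis by (simp add: Zm_def wmat_append)
qed

lemma Zm_row1: "Zm $ 1 = toV [-2,-1,-1,-1,1,1,1]"
proof -
  have "wract Zw (unitv 0) = [-2,-1,-1,-1,1,1,1]" by code_simp
  then show ?thesis unfolding Zm_def wmat_row1 by simp
qed

lemma Zm_ne: "Zm \<noteq> mat 1"
proof
  assume "Zm = mat 1"
  then have "Zm $ 1 = wmat [] $ 1" by simp
  then have "toV [-2,-1,-1,-1,1,1,1] = toV (unitv 0)" unfolding Zm_row1 wmat_row1 by simp
  then have "[-2,-1,-1,-1,1,1,1] = unitv 0" by (rule toV_inj[rotated 2]) (simp_all add: unitv_len)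
  then show False by (simp add: unitv_def upt_rec)
qed

section \<open>Invariants of H1\<close>

definition cv7 :: "int list" where "cv7 = [1,1,1,1,2,2,2]"

lemma gact_cv: "gact n cv7 = cv7" by (simp add: cv7_def)

lemma wact_cv: "wact w cv7 = cv7" by (induction w) (simp_all add: gact_cv)

lemma H1_cv: "g \<in> H1 \<Longrightarrow> g *v toV cv7 = toV cv7"
  unfolding H1_eq using wact_ok[of cv7] wact_cv by (auto simp: cv7_def)

definition Qi :: "int list list" where
  "Qi = [[-1,0,0,0,0,0,0],[0,-1,0,0,0,0,0],[0,0,-1,0,0,0,0],[0,0,0,-1,0,0,0],[0,0,0,0,0,1,1],[0,0,0,0,1,0,1],[0,0,0,0,1,1,0]]"
definition Qm :: mat7 where "Qm = toM Qi"

definition itr :: "int list list \<Rightarrow> int list list" where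
  "itr A = map (\<lambda>c. map (\<lambda>r. A ! r ! c) [0..<7]) [0..<7]"

lemma transpose_toM: "transpose (toM A) = toM (itr A)"
  by (simp add: vec_eq_iff transpose_def toM_nth itr_def)

lemma Q_chk: "list_all (\<lambda>n. imul (imul (Gi n) Qi) (itr (Gi n)) = Qi) [0,1,2,3,4,5]" by code_simp

lemma Q_gen: "n \<in> {0,1,2,3,4,5} \<Longrightarrow> gmat n ** Qm ** transpose (gmat n) = Qm"
proof -
  assume "n \<in> {0,1,2,3,4,5}"
  then have "imul (imul (Gi n) Qi) (itr (Gi n)) = Qi" using Q_chk by auto
  then show ?thesis by (simp add: gmat_toM Qm_def transpose_toM toM_mul)
qed

lemma Q_w: "set w \<subseteq> {0,1,2,3,4,5} \<Longrightarrow> wmat w ** Qm ** transpose (wmat w) = Qm"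
proof (induction w)
  case Nil then show ?case by simp
next
  case (Cons n w)
  have "wmat (n#w) ** Qm ** transpose (wmat (n#w)) =
        gmat n ** (wmat w ** Qm ** transpose (wmat w)) ** transpose (gmat n)"
    by (simp add: matrix_transpose_mul matrix_mul_assoc)
  also have "\<dots> = Qm" using Cons Q_gen by simp
  finally show ?case .
qed

lemma H1_Q: "g \<in> H1 \<Longrightarrow> g ** Qm ** transpose g = Qm"
  unfolding H1_eq using Q_w by auto


lemma vm_toM_nth: "(r v* toM A) $ j = (\<Sum>i\<in>UNIV. r $ i * of_int (A ! pos i ! pos j))"
  by (simp add: vector_matrix_mult_def toM_nth)

lemma mat_row: "((A::mat7) ** B) $ i = A $ i v* B"
  by (simp add: vec_eq_iff matrix_matrix_mult_def vector_matrix_mult_def)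

lemma toM_row: "toM M $ i = toV (M ! pos i)"
  by (simp add: vec_eq_iff toM_nth toV_nth)

definition bwords :: "nat list list" where
  "bwords = [[],[0,5,2,3,4,5,3],[0,5,2,3,4,5],[0,5,2,3,5],[0],[0,1],[0,1,5,0,3,4,5,2,3,5,0]]"
definition Rl :: "int list list" where "Rl = map (\<lambda>w. wract w (unitv 0)) bwords"
definition Rinv :: "int list list" where
  "Rinv = [[1,0,0,0,0,0,0],[0,0,0,0,1,0,0],[0,0,0,0,0,1,0],[4,-1,-1,-1,-1,-1,2],[2,-1,0,0,0,0,1],[2,0,-1,0,0,0,1],[2,0,0,-1,0,0,1]]"

lemma Rinv_chk: "imul Rinv Rl = I7" by code_simp
lemma bwords_chk: "length bwords = 7 \<and> list_all (\<lambda>w. set w \<subseteq> {0,1,2,3,4,5}) bwords" by code_simp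

lemma Rinv_left: "toM Rinv ** toM Rl = mat 1"
  by (simp add: toM_mul Rinv_chk mat1_toM)

lemma Rm_row: "toM Rl $ i = e1v v* wmat (bwords ! pos i)"
proof -
  have "pos i < length bwords" using bwords_chk by simp
  then have "Rl ! pos i = wract (bwords ! pos i) (unitv 0)" by (simp add: Rl_def)
  then show ?thesis by (simp add: toM_row row1_eq e1v_def wmat_row1)
qed

lemma bwords_H1: "wmat (bwords ! pos i) \<in> H1"
proof -
  have "pos i < length bwords" using bwords_chk by simp
  then have "set (bwords ! pos i) \<subseteq> {0,1,2,3,4,5}" using bwords_chk by (simp add: list_all_length)
  then show ?thesis using wmat_H1 by auto
qed

lemma cancel_R: "toM Rl ** z = toM Rl ** M \<Longrightarrow> z = (M::mat7)"
proof -
  assume h: "toM Rl ** z = toM Rl ** M"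
  have "z = (toM Rinv ** toM Rl) ** z" by (simp add: Rinv_left)
  also have "\<dots> = toM Rinv ** (toM Rl ** M)" by (simp add: matrix_mul_assoc[symmetric] h)
  also have "\<dots> = M" by (simp add: matrix_mul_assoc Rinv_left)
  finally show ?thesis .
qed

lemma e1_fix: "n \<in> {1,2,3,4,5} \<Longrightarrow> e1v v* gmat n = e1v"
proof -
  assume "n \<in> {1,2,3,4,5}"
  then have "ract n (unitv 0) = unitv 0" by (auto simp: unitv_def upt_rec)
  then show ?thesis unfolding e1v_def by (simp add: ract_ok unitv_len)
qed

lemma gmat_H1: "n \<in> {0,1,2,3,4,5} \<Longrightarrow> gmat n \<in> H1"
  using wmat_H1[of "[n]"] by auto

lemma Z_unique:
  assumes zH: "z \<in> H1" and zne: "z \<noteq> mat 1" and zc: "\<forall>g\<in>H1. g ** z = z ** g"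
  shows "z = Zm"
proof -
  define r where "r = z $ 1"
  have r_row: "r = e1v v* z" unfolding r_def e1v_def by (simp add: row1_eq)
  have rfix: "r v* gmat n = r" if "n \<in> {1,2,3,4,5}" for n
  proof -
    have "r v* gmat n = e1v v* (z ** gmat n)" by (simp add: r_row vector_matrix_mul_assoc)
    also have "\<dots> = e1v v* (gmat n ** z)" using zc gmat_H1 that by auto
    also have "\<dots> = (e1v v* gmat n) v* z" by (simp add: vector_matrix_mul_assoc)
    also have "\<dots> = r" using e1_fix that r_row by simp
    finally show ?thesis .
  qed
  have comp: "(r v* gmat n) $ j = r $ j" if "n \<in> {1,2,3,4,5}" for n j using rfix that by simp
  have f1: "r $ 3 = r $ 2" using comp[of 1 2] by (simp add: gmat_toM vm_toM_nth sum7 Gi_def)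
  have f2: "r $ 4 = r $ 3" using comp[of 2 3] by (simp add: gmat_toM vm_toM_nth sum7 Gi_def)
  have f3: "r $ 6 = r $ 5" using comp[of 3 5] by (simp add: gmat_toM vm_toM_nth sum7 Gi_def)
  have f4: "r $ 7 = r $ 6" using comp[of 4 6] by (simp add: gmat_toM vm_toM_nth sum7 Gi_def)
  have f5: "- r $ 3 - r $ 6 - r $ 7 = r $ 2" using comp[of 5 2] by (simp add: gmat_toM vm_toM_nth sum7 Gi_def)
  define q where "q = r $ 5"
  define a where "a = r $ 1"
  have "2 * (r $ 2 + q) = 0" using f1 f3 f4 f5 unfolding q_def by (simp add: algebra_simps)
  then have "r $ 2 + q = 0" by (metis mult_eq_0_iff zero_neq_numeral)
  then have p: "r $ 2 = - q" by (simp add: eq_neg_iff_add_eq_0)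
  have r2: "r $ 2 = - q" "r $ 3 = - q" "r $ 4 = - q" "r $ 5 = q" "r $ 6 = q" "r $ 7 = q"
    using p f1 f2 f3 f4 unfolding q_def by simp_all
  have cz: "(z *v toV cv7) $ 1 = 1" using H1_cv[OF zH] by (simp add: toV_nth cv7_def)
  then have "a + 3 * q = 1"
    by (simp add: matrix_vector_mult_def sum7 toV_nth cv7_def r2[unfolded r_def] a_def[unfolded r_def]) (simp add: algebra_simps)
  then have a: "a = 1 - 3 * q" by (simp add: algebra_simps)
  have qz: "(z ** Qm ** transpose z) $ 1 $ 1 = -1" using H1_Q[OF zH] by (simp add: Qm_def toM_nth Qi_def)
  then have "- (a * a) + 3 * (q * q) = -1"
    by (simp add: matrix_matrix_mult_def transpose_def sum7 Qm_def toM_nth Qi_def r2[unfolded r_def] a_def[unfolded r_def])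
  then have "- ((1 - 3*q) * (1 - 3*q)) + 3 * (q * q) = -1" using a by simp
  then have "q * (1 - q) = 0" by (simp add: algebra_simps)
  then have qq: "q = 0 \<or> q = 1" by simp
  have rows: "(toM Rl ** z) $ i = r v* wmat (bwords ! pos i)" for i
  proof -
    have "(toM Rl ** z) $ i = e1v v* (wmat (bwords ! pos i) ** z)"
      by (simp add: mat_row Rm_row vector_matrix_mul_assoc)
    also have "\<dots> = e1v v* (z ** wmat (bwords ! pos i))" using zc bwords_H1 by simp
    also have "\<dots> = r v* wmat (bwords ! pos i)" by (simp add: r_row vector_matrix_mul_assoc)
    finally show ?thesis .
  qed
  from qq show ?thesis
  proof
    assume "q = 0"
    then have "r = e1v" using a r2 unfolding e1v_def a_def
      by (simp add: vec_eq_iff all7 toV_nth unitv_def upt_rec)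
    then have "toM Rl ** z = toM Rl ** mat 1"
      by (simp add: vec_eq_iff[of "toM Rl ** z"] rows Rm_row)
    then have "z = mat 1" by (rule cancel_R)
    with zne show ?thesis by simp
  next
    assume "q = 1"
    then have "r = Zm $ 1" using a r2 unfolding Zm_row1 a_def
      by (simp add: vec_eq_iff all7 toV_nth)
    then have r1: "r = e1v v* Zm" by (simp add: e1v_def row1_eq)
    have "(toM Rl ** z) $ i = (toM Rl ** Zm) $ i" for i
    proof -
      have "(toM Rl ** z) $ i = e1v v* (Zm ** wmat (bwords ! pos i))"
        by (simp add: rows r1 vector_matrix_mul_assoc)
      also have "\<dots> = e1v v* (wmat (bwords ! pos i) ** Zm)" using Zm_central[OF bwords_H1] by simp
      also have "\<dots> = (toM Rl ** Zm) $ i" by (simp add: mat_row Rm_row vector_matrix_mul_assoc)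
      finally show ?thesis .
    qed
    then have "toM Rl ** z = toM Rl ** Zm" by (simp add: vec_eq_iff)
    then show "z = Zm" by (rule cancel_R)
  qed
qed

lemma Z1_eq: "Z1 = Zm"
  unfolding Z1_def
proof (rule the_equality)
  show "Zm \<in> H1 \<and> Zm \<noteq> mat 1 \<and> (\<forall>g\<in>H1. g ** Zm = Zm ** g)"
    using Zm_H1 Zm_ne Zm_central by blast
next
  fix z assume "z \<in> H1 \<and> z \<noteq> mat 1 \<and> (\<forall>g\<in>H1. g ** z = z ** g)"
  then show "z = Zm" using Z_unique by blast
qed


section \<open>J cosets\<close>

definition Tw :: "(jlab \<times> nat list) list" where
  "Tw = [((True,0,0),[]), ((True,1,0),[0]), ((True,2,0),[0,1]), ((False,2,1),[0,5]), ((True,3,0),[0,1,2]), ((False,1,1),[0,1,5]), ((False,3,1),[0,5,2]), ((False,2,2),[0,5,3]), ((False,0,1),[0,1,5,0]), ((False,1,2),[0,1,5,3]), ((False,3,2),[0,5,2,3]), ((False,2,3),[0,5,3,4]), ((False,0,2),[0,1,5,0,3]), ((False,1,3),[0,1,5,3,4]), ((False,3,3),[0,5,2,3,4]), ((True,0,3),[0,5,2,3,5]), ((False,0,3),[0,1,5,0,3,4]), ((True,3,3),[0,1,5,0,3,5]), ((True,0,2),[0,5,2,3,4,5]), ((True,1,3),[0,5,2,3,5,0]), ((True,3,2),[0,1,5,0,3,4,5]), ((True,2,3),[0,1,5,0,3,5,2]), ((True,1,2),[0,5,2,3,4,5,0]), ((True,0,1),[0,5,2,3,4,5,3]), ((True,2,2),[0,1,5,0,3,4,5,2]),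 ((True,3,1),[0,1,5,0,3,4,5,3]), ((True,1,1),[0,5,2,3,4,5,0,3]), ((True,2,1),[0,1,5,0,3,4,5,2,3]), ((False,2,0),[0,5,2,3,4,5,0,3,5]), ((False,1,0),[0,1,5,0,3,4,5,2,3,5]), ((False,3,0),[0,5,2,3,4,5,0,3,5,2]), ((False,0,0),[0,1,5,0,3,4,5,2,3,5,0])]"

definition sch :: "(nat list \<times> nat \<times> nat list \<times> nat list) list" where
  "sch = [([],0,[],[0]), ([],1,[1],[]), ([],2,[2],[]), ([],3,[3],[]), ([],4,[4],[]), ([],5,[5],[]), ([0],0,[],[]), ([0],1,[],[0,1]), ([0],2,[2],[0]), ([0],3,[3],[0]), ([0],4,[4],[0]), ([0],5,[],[0,5]), ([0,1],0,[1],[0,1]), ([0,1],1,[],[0]), ([0,1],2,[],[0,1,2]), ([0,1],3,[3],[0,1]), ([0,1],4,[4],[0,1]), ([0,1],5,[],[0,1,5]), ([0,5],0,[5],[0,5]), ([0,5],1,[],[0,1,5]), ([0,5],2,[],[0,5,2]), ([0,5],3,[],[0,5,3]), ([0,5],4,[4],[0,5]), ([0,5],5,[],[0]), ([0,1,2],0,[1],[0,1,2]), ([0,1,2],1,[2],[0,1,2]), ([0,1,2],2,[],[0,1]), ([0,1,2],3,[3],[0,1,2]), ([0,1,2],4,[4],[0,1,2]), ([0,1,2],5,[1,2,5,2,1],[0,1,2]), ([0,1,5],0,[],[0,1,5,0]), ([0,1,5],1,[],[0,5]), ([0,1,5],2,[1,2,5,2,1],[0,1,5]), ([0,1,5],3,[],[0,1,5,3]),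 ([0,1,5],4,[4],[0,1,5]), ([0,1,5],5,[],[0,1]), ([0,5,2],0,[5],[0,5,2]), ([0,5,2],1,[1,2,5,2,1],[0,5,2]), ([0,5,2],2,[],[0,5]), ([0,5,2],3,[],[0,5,2,3]), ([0,5,2],4,[4],[0,5,2]), ([0,5,2],5,[2],[0,5,2]), ([0,5,3],0,[5],[0,5,3]), ([0,5,3],1,[],[0,1,5,3]), ([0,5,3],2,[],[0,5,2,3]), ([0,5,3],3,[],[0,5]), ([0,5,3],4,[],[0,5,3,4]), ([0,5,3],5,[3],[0,5,3]), ([0,1,5,0],0,[],[0,1,5]), ([0,1,5,0],1,[5],[0,1,5,0]), ([0,1,5,0],2,[1,2,5,2,1],[0,1,5,0]), ([0,1,5,0],3,[],[0,1,5,0,3]), ([0,1,5,0],4,[4],[0,1,5,0]), ([0,1,5,0],5,[1],[0,1,5,0]), ([0,1,5,3],0,[],[0,1,5,0,3]), ([0,1,5,3],1,[],[0,5,3]), ([0,1,5,3],2,[1,2,5,2,1],[0,1,5,3]), ([0,1,5,3],3,[],[0,1,5]), ([0,1,5,3],4,[],[0,1,5,3,4]), ([0,1,5,3],5,[3],[0,1,5,3]), ([0,5,2,3],0,[5],[0,5,2,3]), ([0,5,2,3],1,[1,2,5,2,1],[0,5,2,3]), ([0,5,2,3],2,[],[0,5,3]), ([0,5,2,3],3,[],[0,5,2]), ([0,5,2,3],4,[],[0,5,2,3,4]), ([0,5,2,3],5,[],[0,5,2,3,5]), ([0,5,3,4],0,[5],[0,5,3,4]), ([0,5,3,4],1,[],[0,1,5,3,4]),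 ([0,5,3,4],2,[],[0,5,2,3,4]), ([0,5,3,4],3,[4],[0,5,3,4]), ([0,5,3,4],4,[],[0,5,3]), ([0,5,3,4],5,[3],[0,5,3,4]), ([0,1,5,0,3],0,[],[0,1,5,3]), ([0,1,5,0,3],1,[5],[0,1,5,0,3]), ([0,1,5,0,3],2,[1,2,5,2,1],[0,1,5,0,3]), ([0,1,5,0,3],3,[],[0,1,5,0]), ([0,1,5,0,3],4,[],[0,1,5,0,3,4]), ([0,1,5,0,3],5,[],[0,1,5,0,3,5]), ([0,1,5,3,4],0,[],[0,1,5,0,3,4]), ([0,1,5,3,4],1,[],[0,5,3,4]), ([0,1,5,3,4],2,[1,2,5,2,1],[0,1,5,3,4]), ([0,1,5,3,4],3,[4],[0,1,5,3,4]), ([0,1,5,3,4],4,[],[0,1,5,3]), ([0,1,5,3,4],5,[3],[0,1,5,3,4]), ([0,5,2,3,4],0,[5],[0,5,2,3,4]), ([0,5,2,3,4],1,[1,2,5,2,1],[0,5,2,3,4]), ([0,5,2,3,4],2,[],[0,5,3,4]), ([0,5,2,3,4],3,[4],[0,5,2,3,4]), ([0,5,2,3,4],4,[],[0,5,2,3]), ([0,5,2,3,4],5,[],[0,5,2,3,4,5]), ([0,5,2,3,5],0,[],[0,5,2,3,5,0]), ([0,5,2,3,5],1,[1,2,5,2,1],[0,5,2,3,5]), ([0,5,2,3,5],2,[3],[0,5,2,3,5]), ([0,5,2,3,5],3,[2],[0,5,2,3,5]), ([0,5,2,3,5],4,[],[0,5,2,3,4,5]), ([0,5,2,3,5],5,[],[0,5,2,3]),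 ([0,1,5,0,3,4],0,[],[0,1,5,3,4]), ([0,1,5,0,3,4],1,[5],[0,1,5,0,3,4]), ([0,1,5,0,3,4],2,[1,2,5,2,1],[0,1,5,0,3,4]), ([0,1,5,0,3,4],3,[4],[0,1,5,0,3,4]), ([0,1,5,0,3,4],4,[],[0,1,5,0,3]), ([0,1,5,0,3,4],5,[],[0,1,5,0,3,4,5]), ([0,1,5,0,3,5],0,[3],[0,1,5,0,3,5]), ([0,1,5,0,3,5],1,[5],[0,1,5,0,3,5]), ([0,1,5,0,3,5],2,[],[0,1,5,0,3,5,2]), ([0,1,5,0,3,5],3,[1],[0,1,5,0,3,5]), ([0,1,5,0,3,5],4,[],[0,1,5,0,3,4,5]), ([0,1,5,0,3,5],5,[],[0,1,5,0,3]), ([0,5,2,3,4,5],0,[],[0,5,2,3,4,5,0]), ([0,5,2,3,4,5],1,[1,2,5,2,1],[0,5,2,3,4,5]), ([0,5,2,3,4,5],2,[3],[0,5,2,3,4,5]), ([0,5,2,3,4,5],3,[],[0,5,2,3,4,5,3]), ([0,5,2,3,4,5],4,[],[0,5,2,3,5]), ([0,5,2,3,4,5],5,[],[0,5,2,3,4]), ([0,5,2,3,5,0],0,[],[0,5,2,3,5]), ([0,5,2,3,5,0],1,[1,2,1,3,5,3],[0,1,5,0,3,5,2]), ([0,5,2,3,5,0],2,[3],[0,5,2,3,5,0]), ([0,5,2,3,5,0],3,[2],[0,5,2,3,5,0]), ([0,5,2,3,5,0],4,[],[0,5,2,3,4,5,0]), ([0,5,2,3,5,0],5,[5],[0,5,2,3,5,0]),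 ([0,1,5,0,3,4,5],0,[3],[0,1,5,0,3,4,5]), ([0,1,5,0,3,4,5],1,[5],[0,1,5,0,3,4,5]), ([0,1,5,0,3,4,5],2,[],[0,1,5,0,3,4,5,2]), ([0,1,5,0,3,4,5],3,[],[0,1,5,0,3,4,5,3]), ([0,1,5,0,3,4,5],4,[],[0,1,5,0,3,5]), ([0,1,5,0,3,4,5],5,[],[0,1,5,0,3,4]), ([0,1,5,0,3,5,2],0,[3],[0,1,5,0,3,5,2]), ([0,1,5,0,3,5,2],1,[1,3,5,2,1,3],[0,5,2,3,5,0]), ([0,1,5,0,3,5,2],2,[],[0,1,5,0,3,5]), ([0,1,5,0,3,5,2],3,[1],[0,1,5,0,3,5,2]), ([0,1,5,0,3,5,2],4,[],[0,1,5,0,3,4,5,2]), ([0,1,5,0,3,5,2],5,[1,2,5,2,1],[0,1,5,0,3,5,2]), ([0,5,2,3,4,5,0],0,[],[0,5,2,3,4,5]), ([0,5,2,3,4,5,0],1,[1,2,1,3,5,3],[0,1,5,0,3,4,5,2]), ([0,5,2,3,4,5,0],2,[3],[0,5,2,3,4,5,0]), ([0,5,2,3,4,5,0],3,[],[0,5,2,3,4,5,0,3]), ([0,5,2,3,4,5,0],4,[],[0,5,2,3,5,0]), ([0,5,2,3,4,5,0],5,[5],[0,5,2,3,4,5,0]), ([0,5,2,3,4,5,3],0,[],[0,5,2,3,4,5,0,3]), ([0,5,2,3,4,5,3],1,[1,2,5,2,1],[0,5,2,3,4,5,3]), ([0,5,2,3,4,5,3],2,[3],[0,5,2,3,4,5,3]),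 ([0,5,2,3,4,5,3],3,[],[0,5,2,3,4,5]), ([0,5,2,3,4,5,3],4,[2],[0,5,2,3,4,5,3]), ([0,5,2,3,4,5,3],5,[4],[0,5,2,3,4,5,3]), ([0,1,5,0,3,4,5,2],0,[3],[0,1,5,0,3,4,5,2]), ([0,1,5,0,3,4,5,2],1,[1,3,5,2,1,3],[0,5,2,3,4,5,0]), ([0,1,5,0,3,4,5,2],2,[],[0,1,5,0,3,4,5]), ([0,1,5,0,3,4,5,2],3,[],[0,1,5,0,3,4,5,2,3]), ([0,1,5,0,3,4,5,2],4,[],[0,1,5,0,3,5,2]), ([0,1,5,0,3,4,5,2],5,[1,2,5,2,1],[0,1,5,0,3,4,5,2]), ([0,1,5,0,3,4,5,3],0,[3],[0,1,5,0,3,4,5,3]), ([0,1,5,0,3,4,5,3],1,[5],[0,1,5,0,3,4,5,3]), ([0,1,5,0,3,4,5,3],2,[],[0,1,5,0,3,4,5,2,3]), ([0,1,5,0,3,4,5,3],3,[],[0,1,5,0,3,4,5]), ([0,1,5,0,3,4,5,3],4,[1],[0,1,5,0,3,4,5,3]), ([0,1,5,0,3,4,5,3],5,[4],[0,1,5,0,3,4,5,3]), ([0,5,2,3,4,5,0,3],0,[],[0,5,2,3,4,5,3]), ([0,5,2,3,4,5,0,3],1,[1,2,1,3,5,3],[0,1,5,0,3,4,5,2,3]), ([0,5,2,3,4,5,0,3],2,[3],[0,5,2,3,4,5,0,3]), ([0,5,2,3,4,5,0,3],3,[],[0,5,2,3,4,5,0]), ([0,5,2,3,4,5,0,3],4,[2],[0,5,2,3,4,5,0,3]),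 ([0,5,2,3,4,5,0,3],5,[],[0,5,2,3,4,5,0,3,5]), ([0,1,5,0,3,4,5,2,3],0,[3],[0,1,5,0,3,4,5,2,3]), ([0,1,5,0,3,4,5,2,3],1,[1,3,5,2,1,3],[0,5,2,3,4,5,0,3]), ([0,1,5,0,3,4,5,2,3],2,[],[0,1,5,0,3,4,5,3]), ([0,1,5,0,3,4,5,2,3],3,[],[0,1,5,0,3,4,5,2]), ([0,1,5,0,3,4,5,2,3],4,[1],[0,1,5,0,3,4,5,2,3]), ([0,1,5,0,3,4,5,2,3],5,[],[0,1,5,0,3,4,5,2,3,5]), ([0,5,2,3,4,5,0,3,5],0,[4],[0,5,2,3,4,5,0,3,5]), ([0,5,2,3,4,5,0,3,5],1,[1,2,1,3,5,3],[0,1,5,0,3,4,5,2,3,5]), ([0,5,2,3,4,5,0,3,5],2,[],[0,5,2,3,4,5,0,3,5,2]), ([0,5,2,3,4,5,0,3,5],3,[5],[0,5,2,3,4,5,0,3,5]), ([0,5,2,3,4,5,0,3,5],4,[2],[0,5,2,3,4,5,0,3,5]), ([0,5,2,3,4,5,0,3,5],5,[],[0,5,2,3,4,5,0,3]), ([0,1,5,0,3,4,5,2,3,5],0,[],[0,1,5,0,3,4,5,2,3,5,0]), ([0,1,5,0,3,4,5,2,3,5],1,[1,3,5,2,1,3],[0,5,2,3,4,5,0,3,5]), ([0,1,5,0,3,4,5,2,3,5],2,[4],[0,1,5,0,3,4,5,2,3,5]), ([0,1,5,0,3,4,5,2,3,5],3,[1,2,5,2,1],[0,1,5,0,3,4,5,2,3,5]),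 ([0,1,5,0,3,4,5,2,3,5],4,[1],[0,1,5,0,3,4,5,2,3,5]), ([0,1,5,0,3,4,5,2,3,5],5,[],[0,1,5,0,3,4,5,2,3]), ([0,5,2,3,4,5,0,3,5,2],0,[4],[0,5,2,3,4,5,0,3,5,2]), ([0,5,2,3,4,5,0,3,5,2],1,[1,2,4,3,5,2,1,3,4],[0,5,2,3,4,5,0,3,5,2]), ([0,5,2,3,4,5,0,3,5,2],2,[],[0,5,2,3,4,5,0,3,5]), ([0,5,2,3,4,5,0,3,5,2],3,[5],[0,5,2,3,4,5,0,3,5,2]), ([0,5,2,3,4,5,0,3,5,2],4,[2],[0,5,2,3,4,5,0,3,5,2]), ([0,5,2,3,4,5,0,3,5,2],5,[3],[0,5,2,3,4,5,0,3,5,2]), ([0,1,5,0,3,4,5,2,3,5,0],0,[],[0,1,5,0,3,4,5,2,3,5]), ([0,1,5,0,3,4,5,2,3,5,0],1,[4,3,5,3,4],[0,1,5,0,3,4,5,2,3,5,0]), ([0,1,5,0,3,4,5,2,3,5,0],2,[4],[0,1,5,0,3,4,5,2,3,5,0]), ([0,1,5,0,3,4,5,2,3,5,0],3,[1,2,5,2,1],[0,1,5,0,3,4,5,2,3,5,0]), ([0,1,5,0,3,4,5,2,3,5,0],4,[1],[0,1,5,0,3,4,5,2,3,5,0]), ([0,1,5,0,3,4,5,2,3,5,0],5,[3],[0,1,5,0,3,4,5,2,3,5,0])]"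

definition phil :: "int list" where "phil = [-1,-1,-1,-1,1,1,1]"

definition vecJ :: "jlab \<Rightarrow> int list" where
  "vecJ l = (case l of (p,r,q) \<Rightarrow>
     (let A = unitv r; E = (if q = 0 then phil else unitv (q+3)) in
      if p then map2 (+) phil (map2 (-) A E) else map2 (-) E A))"

definition jlabs :: "jlab list" where
  "jlabs = [(p,r,q). p \<leftarrow> [True,False], r \<leftarrow> [0..<4], q \<leftarrow> [0..<4]]"

lemma valid_iff3: "valid_jlab (p,r,q) \<longleftrightarrow> (p,r,q) \<in> set jlabs"
  by (cases p) (auto simp: valid_jlab_def jlabs_def image_iff)
lemma valid_iff: "valid_jlab l \<longleftrightarrow> l \<in> set jlabs"
  using valid_iff3 by (cases l) auto

definition tw :: "jlab \<Rightarrow> nat list" where "tw l = the (map_of Tw l)"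

lemma Tw_chk: "list_all (\<lambda>(l,t). l \<in> set jlabs \<and> set t \<subseteq> {0,1,2,3,4,5} \<and> wract t (unitv 0) = vecJ l) Tw
   \<and> list_all (\<lambda>l. l \<in> set (map fst Tw)) jlabs \<and> distinct (map vecJ jlabs)
   \<and> list_all (\<lambda>l. length (vecJ l) = 7) jlabs"
  by code_simp

lemma sch_chk: "list_all (\<lambda>(t,n,w,t2). weq (t@[n]) (w@t2) \<and> set w \<subseteq> {1,2,3,4,5} \<and> t2 \<in> set (map snd Tw)) sch"
  by code_simp

lemma sch_cov: "list_all (\<lambda>t. list_all (\<lambda>n. list_ex (\<lambda>(t',n',w,t2). t' = t \<and> n' = n) sch) [0..<6]) (map snd Tw)"
  by code_simp


lemma Tw_dist: "distinct (map fst Tw)" by code_simp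

definition cdot :: "vec7 \<Rightarrow> vec7 \<Rightarrow> complex" where "cdot u x = (\<Sum>i\<in>UNIV. u $ i * x $ i)"

lemma mv_row: "(A *v x) $ i = cdot (A $ i) x" by (simp add: matrix_vector_mult_def cdot_def)

lemma V_span:
  assumes h: "\<forall>x\<in>Vset. cdot u x = cdot u' x"
  shows "u = u'"
proof -
  have pt: "cdot u (toV p) = cdot u' (toV p)" if "toV p \<in> Vset" for p using h that by blast
  have m: "toV [0,0,0,0,1,0,0] \<in> Vset" "toV [0,0,0,0,0,1,0] \<in> Vset" "toV [0,0,0,0,0,0,1] \<in> Vset"
    "toV [1,0,0,0,2,0,0] \<in> Vset" "toV [0,1,0,0,2,0,0] \<in> Vset" "toV [0,0,1,0,2,0,0] \<in> Vset"
    "toV [0,0,0,1,2,0,0] \<in> Vset"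
    by (simp_all add: Vset_def toV_nth)
  have e5: "u $ 5 = u' $ 5" using pt[OF m(1)] by (simp add: cdot_def sum7 toV_nth)
  have e6: "u $ 6 = u' $ 6" using pt[OF m(2)] by (simp add: cdot_def sum7 toV_nth)
  have e7: "u $ 7 = u' $ 7" using pt[OF m(3)] by (simp add: cdot_def sum7 toV_nth)
  have e1: "u $ 1 = u' $ 1" using pt[OF m(4)] e5 by (simp add: cdot_def sum7 toV_nth)
  have e2: "u $ 2 = u' $ 2" using pt[OF m(5)] e5 by (simp add: cdot_def sum7 toV_nth)
  have e3: "u $ 3 = u' $ 3" using pt[OF m(6)] e5 by (simp add: cdot_def sum7 toV_nth)
  have e4: "u $ 4 = u' $ 4" using pt[OF m(7)] e5 by (simp add: cdot_def sum7 toV_nth)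
  show ?thesis using e1 e2 e3 e4 e5 e6 e7 by (simp add: vec_eq_iff all7)
qed

lemma mat_V:
  assumes "\<forall>x\<in>Vset. (A::mat7) *v x = B *v x"
  shows "A = B"
proof -
  have "A $ i = B $ i" for i
  proof (rule V_span)
    show "\<forall>x\<in>Vset. cdot (A $ i) x = cdot (B $ i) x" using assms by (simp add: mv_row[symmetric])
  qed
  then show ?thesis by (simp add: vec_eq_iff)
qed

lemma pos_of_nat: "k < 7 \<Longrightarrow> pos i = k \<longleftrightarrow> i = of_nat (k+1)"
proof -
  assume "k < 7"
  then have "pos (of_nat (k+1) :: 7) = k" by (auto dest!: less7)
  then show ?thesis using pos_inj by metis
qed

lemma cdot_toV: "cdot (toV u) x = (\<Sum>i\<in>UNIV. of_int (u ! pos i) * x $ i)"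
  by (simp add: cdot_def toV_nth)

lemma cdot_unit: "k < 7 \<Longrightarrow> cdot (toV (unitv k)) x = x $ of_nat (k+1)"
proof -
  assume k: "k < 7"
  have "cdot (toV (unitv k)) x = (\<Sum>i\<in>UNIV. if i = of_nat (k+1) then x $ i else 0)"
    unfolding cdot_toV by (rule sum.cong) (auto simp: unitv_nth pos_of_nat[OF k])
  then show ?thesis by simp
qed

lemma cdot_add: "length a = 7 \<Longrightarrow> length b = 7 \<Longrightarrow>
  cdot (toV (map2 (+) a b)) x = cdot (toV a) x + cdot (toV b) x"
  unfolding cdot_toV by (simp add: sum.distrib[symmetric] algebra_simps)

lemma cdot_sub: "length a = 7 \<Longrightarrow> length b = 7 \<Longrightarrow>
  cdot (toV (map2 (-) a b)) x = cdot (toV a) x - cdot (toV b) x"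
  unfolding cdot_toV by (simp add: sum_subtractf[symmetric] algebra_simps)

lemma cdot_phil: "x \<in> Vset \<Longrightarrow> cdot (toV phil) x = 1"
  by (simp add: cdot_toV sum7 phil_def Vset_def algebra_simps)

lemma jfun_V:
  assumes l: "valid_jlab l" and x: "x \<in> Vset"
  shows "jfun l x = cdot (toV (vecJ l)) x"
proof -
  obtain p r q where lp: "l = (p,r,q)" by (cases l)
  then have rq: "r \<le> 3" "q \<le> 3" using l by (auto simp: valid_jlab_def)
  have lens: "length phil = 7" "length (unitv k) = 7" for k by (simp_all add: phil_def unitv_len)
  have A: "Acoord r x = cdot (toV (unitv r)) x" using rq by (simp add: Acoord_def cdot_unit)
  have E: "Ecoord q x = cdot (toV (if q = 0 then phil else unitv (q+3))) x"
  proof (cases "q = 0")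
    case True then show ?thesis by (simp add: Ecoord_def cdot_phil x)
  next
    case False
    have q7: "q + 3 < 7" using rq by simp
    have "cdot (toV (unitv (q+3))) x = x $ of_nat (q+3+1)" by (rule cdot_unit[OF q7])
    moreover have "q+3+1 = q+4" by simp
    ultimately have "cdot (toV (unitv (q+3))) x = x $ of_nat (q+4)" by (simp only:)
    then show ?thesis unfolding Ecoord_def if_not_P[OF False] by (simp only: if_not_P[OF False])
  qed
  have lE: "length (if q = 0 then phil else unitv (q+3)) = 7" using lens by simp
  show ?thesis unfolding lp
    by (cases p) (simp_all add: jfun_def vecJ_def Let_def cdot_add cdot_sub lens lE cdot_phil x A E)
qed

lemma Jcoset_eq: "valid_jlab l \<Longrightarrow> Jcoset l = {\<alpha> \<in> H1. \<alpha> $ 1 = toV (vecJ l)}"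
proof -
  assume l: "valid_jlab l"
  have "(\<forall>x\<in>Vset. (\<alpha> *v x) $ 1 = jfun l x) \<longleftrightarrow> \<alpha> $ 1 = toV (vecJ l)" for \<alpha> :: mat7
  proof
    assume h: "\<forall>x\<in>Vset. (\<alpha> *v x) $ 1 = jfun l x"
    have "\<forall>x\<in>Vset. cdot (\<alpha> $ 1) x = cdot (toV (vecJ l)) x"
    proof
      fix x assume x: "x \<in> Vset"
      have "(\<alpha> *v x) $ 1 = jfun l x" using h x by blast
      then show "cdot (\<alpha> $ 1) x = cdot (toV (vecJ l)) x" by (simp only: mv_row jfun_V[OF l x])
    qed
    then show "\<alpha> $ 1 = toV (vecJ l)" by (rule V_span)
  next
    assume h: "\<alpha> $ 1 = toV (vecJ l)"
    show "\<forall>x\<in>Vset. (\<alpha> *v x) $ 1 = jfun l x"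
    proof
      fix x assume x: "x \<in> Vset"
      show "(\<alpha> *v x) $ 1 = jfun l x" by (simp only: mv_row jfun_V[OF l x] h)
    qed
  qed
  then show ?thesis unfolding Jcoset_def by blast
qed

lemma ract_e1: "n \<in> {1,2,3,4,5} \<Longrightarrow> ract n (unitv 0) = unitv 0"
  by (auto simp: unitv_def upt_rec)

lemma wract_e1: "set w \<subseteq> {1,2,3,4,5} \<Longrightarrow> wract w (unitv 0) = unitv 0"
  by (induction w) (simp_all add: ract_e1)

lemma GJ_row: "g \<in> GJ \<Longrightarrow> g $ 1 = e1v"
  unfolding GJ_eq e1v_def using wract_e1 wmat_row1 by auto

lemma GJ_row_mult:
  fixes A :: mat7
  assumes "g \<in> GJ" shows "(g ** A) $ 1 = A $ 1"
proof -
  have "(g ** A) $ 1 = g $ 1 v* A" by (rule mat_row)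
  also have "\<dots> = e1v v* A" using GJ_row[OF assms] by simp
  also have "\<dots> = A $ 1" unfolding e1v_def by (rule row1_eq)
  finally show ?thesis .
qed

definition Uset :: "mat7 set" where
  "Uset = {g ** wmat t | g t. g \<in> GJ \<and> t \<in> set (map snd Tw)}"

lemma sch_step:
  assumes u: "u \<in> Uset" and n: "n \<in> {0,1,2,3,4,5}"
  shows "u ** gmat n \<in> Uset"
proof -
  obtain g t where g: "g \<in> GJ" and t: "t \<in> set (map snd Tw)" and ue: "u = g ** wmat t"
    using u unfolding Uset_def by blast
  have "n \<in> set [0..<6]" using n by auto
  then obtain t' n' w t2 where e: "(t',n',w,t2) \<in> set sch" and tt: "t' = t" "n' = n"
    using sch_cov t unfolding list_all_iff list_ex_iff by fastforce
  then have c: "weq (t@[n]) (w@t2)" "set w \<subseteq> {1,2,3,4,5}" "t2 \<in> set (map snd Tw)"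
    using sch_chk unfolding list_all_iff by auto
  have "u ** gmat n = g ** wmat (t @ [n])" using ue by (simp add: wmat_append matrix_mul_assoc)
  also have "\<dots> = g ** wmat (w @ t2)" using weq_ok[OF c(1)] by simp
  also have "\<dots> = (g ** wmat w) ** wmat t2" by (simp add: wmat_append matrix_mul_assoc)
  finally have "u ** gmat n = (g ** wmat w) ** wmat t2" .
  moreover have "g ** wmat w \<in> GJ" using g c(2) GJ_mult unfolding GJ_eq by blast
  ultimately show ?thesis using c(3) unfolding Uset_def by blast
qed

lemma Uset_words: "set w \<subseteq> {0,1,2,3,4,5} \<Longrightarrow> u \<in> Uset \<Longrightarrow> u ** wmat w \<in> Uset"
proof (induction w arbitrary: u)
  case Nil then show ?case by simp
next
  case (Cons n w)
  have "u ** gmat n \<in> Uset" using Cons.prems sch_step by auto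
  then have "(u ** gmat n) ** wmat w \<in> Uset" using Cons by auto
  then show ?case by (simp add: matrix_mul_assoc)
qed

lemma one_Uset: "mat 1 \<in> Uset"
proof -
  have "[] \<in> set (map snd Tw)" by (simp add: Tw_def)
  moreover have "mat 1 \<in> GJ" unfolding GJ_def by (rule gen_grp.one)
  ultimately show ?thesis unfolding Uset_def by (auto intro!: exI[of _ "mat 1"] exI[of _ "[]"])
qed

lemma H1_Uset: "\<alpha> \<in> H1 \<Longrightarrow> \<alpha> \<in> Uset"
  unfolding H1_eq using Uset_words[OF _ one_Uset] by auto

lemma Tw_mem: "(l,t) \<in> set Tw \<Longrightarrow> valid_jlab l \<and> set t \<subseteq> {0,1,2,3,4,5} \<and> wract t (unitv 0) = vecJ l"
  using Tw_chk valid_iff unfolding list_all_iff by fastforce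

lemma tw_mem: "valid_jlab l \<Longrightarrow> (l, tw l) \<in> set Tw"
proof -
  assume "valid_jlab l"
  then have "l \<in> set (map fst Tw)" using Tw_chk valid_iff unfolding list_all_iff by blast
  then have "map_of Tw l \<noteq> None" by (simp add: map_of_eq_None_iff)
  then obtain t where "map_of Tw l = Some t" by blast
  then show ?thesis unfolding tw_def by (simp add: map_of_SomeD)
qed

lemma tw_uniq: "(l,t) \<in> set Tw \<Longrightarrow> tw l = t"
  unfolding tw_def using Tw_dist by (simp add: map_of_is_SomeI)

lemma vecJ_len: "valid_jlab l \<Longrightarrow> length (vecJ l) = 7"
  using Tw_chk valid_iff unfolding list_all_iff by blast

lemma vecJ_inj: "valid_jlab l \<Longrightarrow> valid_jlab l' \<Longrightarrow> toV (vecJ l) = toV (vecJ l') \<Longrightarrow> l = l'"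
proof -
  assume a: "valid_jlab l" "valid_jlab l'" "toV (vecJ l) = toV (vecJ l')"
  then have "vecJ l = vecJ l'" using toV_inj vecJ_len by blast
  moreover have "inj_on vecJ (set jlabs)" using Tw_chk distinct_map by blast
  ultimately show ?thesis using a valid_iff by (meson inj_onD)
qed

lemma tw_row: "valid_jlab l \<Longrightarrow> wmat (tw l) $ 1 = toV (vecJ l)"
proof -
  assume "valid_jlab l"
  then have "wract (tw l) (unitv 0) = vecJ l" using tw_mem Tw_mem by blast
  then show ?thesis by (simp add: wmat_row1)
qed

lemma tw_H1: "valid_jlab l \<Longrightarrow> wmat (tw l) \<in> H1"
  using tw_mem Tw_mem wmat_H1 by blast

lemma Jcoset_rcos: "valid_jlab l \<Longrightarrow> Jcoset l = rcos GJ (wmat (tw l))"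
proof
  assume l: "valid_jlab l"
  show "Jcoset l \<subseteq> rcos GJ (wmat (tw l))"
  proof
    fix \<alpha> assume "\<alpha> \<in> Jcoset l"
    then have aH: "\<alpha> \<in> H1" and ar: "\<alpha> $ 1 = toV (vecJ l)" using Jcoset_eq[OF l] by auto
    obtain g t where g: "g \<in> GJ" and t: "t \<in> set (map snd Tw)" and ae: "\<alpha> = g ** wmat t"
      using H1_Uset[OF aH] unfolding Uset_def by blast
    obtain l' where lt: "(l',t) \<in> set Tw" using t by auto
    have "\<alpha> $ 1 = wmat t $ 1" using ae GJ_row_mult[OF g] by simp
    also have "\<dots> = toV (vecJ l')" using Tw_mem[OF lt] by (simp add: wmat_row1)
    finally have "toV (vecJ l) = toV (vecJ l')" using ar by simp
    then have "l = l'" using vecJ_inj l Tw_mem[OF lt] by blast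
    then have "t = tw l" using tw_uniq lt by simp
    then show "\<alpha> \<in> rcos GJ (wmat (tw l))" using ae g unfolding rcos_def by blast
  qed
next
  assume l: "valid_jlab l"
  show "rcos GJ (wmat (tw l)) \<subseteq> Jcoset l"
  proof
    fix \<alpha> assume "\<alpha> \<in> rcos GJ (wmat (tw l))"
    then obtain g where g: "g \<in> GJ" and ae: "\<alpha> = g ** wmat (tw l)" unfolding rcos_def by blast
    have "\<alpha> \<in> H1" using ae g GJ_H1 tw_H1[OF l] H1_mult by blast
    moreover have "\<alpha> $ 1 = toV (vecJ l)"
    proof -
      have "(g ** wmat (tw l)) $ 1 = wmat (tw l) $ 1" by (rule GJ_row_mult[OF g])
      then show ?thesis using ae tw_row[OF l] by simp
    qed
    ultimately show "\<alpha> \<in> Jcoset l" using Jcoset_eq[OF l] by blast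
  qed
qed

lemma Jcoset_in: "valid_jlab l \<Longrightarrow> Jcoset l \<in> Jcosets"
  unfolding Jcosets_def using Jcoset_rcos tw_H1 by blast

lemma Jcoset_mem: "valid_jlab l \<Longrightarrow> wmat (tw l) \<in> Jcoset l"
  using Jcoset_eq tw_H1 tw_row by blast

lemma Jcoset_inj: "valid_jlab l \<Longrightarrow> valid_jlab l' \<Longrightarrow> Jcoset l = Jcoset l' \<Longrightarrow> l = l'"
proof -
  assume a: "valid_jlab l" "valid_jlab l'" "Jcoset l = Jcoset l'"
  then have "wmat (tw l) \<in> Jcoset l'" using Jcoset_mem by blast
  then have "toV (vecJ l) = toV (vecJ l')" using Jcoset_eq[OF a(2)] tw_row[OF a(1)] by auto
  then show ?thesis using vecJ_inj a by blast
qed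

lemma jstr_of_J: "valid_jlab l \<Longrightarrow> jstr_of (Jcoset l) = jstring l"
  unfolding jstr_of_def
proof (rule some_equality)
  assume "valid_jlab l"
  then show "\<exists>l'. valid_jlab l' \<and> Jcoset l = Jcoset l' \<and> jstring l = jstring l'" by blast
next
  fix s assume l: "valid_jlab l" and "\<exists>l'. valid_jlab l' \<and> Jcoset l = Jcoset l' \<and> s = jstring l'"
  then obtain l' where "valid_jlab l'" "Jcoset l = Jcoset l'" "s = jstring l'" by blast
  then show "s = jstring l" using Jcoset_inj[OF l] by blast
qed

lemma rcos_GJ_row: "\<beta> \<in> rcos GJ \<alpha> \<Longrightarrow> \<beta> $ 1 = \<alpha> $ 1"
  unfolding rcos_def using GJ_row_mult by auto


section \<open>L cosets\<close>

definition bwl :: "nat list list" where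
  "bwl = [[5,2,1,3,4,5,2,3,5], [3,5,2,1,3,4,5,2,3,5], [3,4,5,2,1,3,4,5,2,3,5], [], [3], [3,4,3]]"

lemma bw_rows1: "map (\<lambda>i. wract (bwl ! 0) (unitv i)) [0..<7] = [[1,0,0,0,0,0,0],[0,-1,-1,-1,0,1,1],[0,-1,-1,-1,1,0,1],[0,-1,-1,-1,1,1,0],[0,-2,-1,-1,1,1,1],[0,-1,-2,-1,1,1,1],[0,-1,-1,-2,1,1,1]]"
  by code_simp

lemma bw_rows2: "map (\<lambda>i. wract (bwl ! 1) (unitv i)) [0..<7] = [[1,0,0,0,0,0,0],[0,-1,-1,-1,0,1,1],[0,-1,-1,-1,1,0,1],[0,-1,-1,-1,1,1,0],[0,-1,-2,-1,1,1,1],[0,-2,-1,-1,1,1,1],[0,-1,-1,-2,1,1,1]]"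
  by code_simp

lemma bw_rows3: "map (\<lambda>i. wract (bwl ! 2) (unitv i)) [0..<7] = [[1,0,0,0,0,0,0],[0,-1,-1,-1,0,1,1],[0,-1,-1,-1,1,0,1],[0,-1,-1,-1,1,1,0],[0,-1,-1,-2,1,1,1],[0,-2,-1,-1,1,1,1],[0,-1,-2,-1,1,1,1]]"
  by code_simp

lemma bw_rows4: "map (\<lambda>i. wract (bwl ! 3) (unitv i)) [0..<7] = [[1,0,0,0,0,0,0],[0,1,0,0,0,0,0],[0,0,1,0,0,0,0],[0,0,0,1,0,0,0],[0,0,0,0,1,0,0],[0,0,0,0,0,1,0],[0,0,0,0,0,0,1]]"
  by code_simp

lemma bw_rows5: "map (\<lambda>i. wract (bwl ! 4) (unitv i)) [0..<7] = [[1,0,0,0,0,0,0],[0,1,0,0,0,0,0],[0,0,1,0,0,0,0],[0,0,0,1,0,0,0],[0,0,0,0,0,1,0],[0,0,0,0,1,0,0],[0,0,0,0,0,0,1]]"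
  by code_simp

lemma bw_rows6: "map (\<lambda>i. wract (bwl ! 5) (unitv i)) [0..<7] = [[1,0,0,0,0,0,0],[0,1,0,0,0,0,0],[0,0,1,0,0,0,0],[0,0,0,1,0,0,0],[0,0,0,0,0,0,1],[0,0,0,0,0,1,0],[0,0,0,0,1,0,0]]"
  by code_simp


lemma row_gen: "toV (unitv (pos i)) v* (A::mat7) = A $ i"
proof -
  have "(toV (unitv (pos i)) v* A) $ j = A $ i $ j" for j
  proof -
    have "(toV (unitv (pos i)) v* A) $ j = (\<Sum>m\<in>UNIV. complex_of_int (if m = i then 1 else 0) * A $ m $ j)"
      by (simp add: vector_matrix_mult_def toV_nth unitv_nth pos_inj)
    also have "\<dots> = (\<Sum>m\<in>UNIV. if m = i then A $ m $ j else 0)" by (rule sum.cong) auto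
    also have "\<dots> = A $ i $ j" by simp
    finally show ?thesis .
  qed
  then show ?thesis by (simp add: vec_eq_iff)
qed

lemma wmat_rows: "wmat w = toM (map (\<lambda>i. wract w (unitv i)) [0..<7])"
proof -
  have "wmat w $ i = toM (map (\<lambda>i. wract w (unitv i)) [0..<7]) $ i" for i
  proof -
    have "toM (map (\<lambda>i. wract w (unitv i)) [0..<7]) $ i = toV (wract w (unitv (pos i)))"
      by (simp add: toM_row)
    also have "\<dots> = toV (unitv (pos i)) v* wmat w" by (simp add: wract_ok unitv_len)
    also have "\<dots> = wmat w $ i" by (rule row_gen)
    finally show ?thesis by simp
  qed
  then show ?thesis by (simp add: vec_eq_iff)
qed

definition bwd :: "bool \<times> nat \<Rightarrow> nat list" where
  "bwd s = (case s of (b,k) \<Rightarrow> if b then Zw @ bwl ! (k-1) else bwl ! (k-1))"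
definition betam :: "bool \<times> nat \<Rightarrow> mat7" where "betam s = wmat (bwd s)"
definition Llabs :: "(bool \<times> nat) list" where "Llabs = [(b,k). b \<leftarrow> [False,True], k \<leftarrow> [1..<7]]"
definition flipl :: "bool \<times> nat \<Rightarrow> bool \<times> nat" where "flipl s = (case s of (b,k) \<Rightarrow> (\<not> b, k))"

lemma Llabs_iff: "(b,k) \<in> set Llabs \<longleftrightarrow> 1 \<le> k \<and> k \<le> 6"
  by (cases b) (auto simp: Llabs_def)

lemma bwl_chk: "list_all (\<lambda>w. set w \<subseteq> {0,1,2,3,4,5}) bwl \<and> length bwl = 6" by code_simp

lemma bwd_set: "s \<in> set Llabs \<Longrightarrow> set (bwd s) \<subseteq> {0,1,2,3,4,5}"
proof -
  assume "s \<in> set Llabs"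
  moreover obtain b k where s0: "s = (b,k)" by (cases s)
  ultimately have s: "s = (b,k)" "1 \<le> k" "k \<le> 6" using Llabs_iff by auto
  then have "k - 1 < length bwl" using bwl_chk by simp
  then have "set (bwl ! (k-1)) \<subseteq> {0,1,2,3,4,5}" using bwl_chk by (simp add: list_all_length)
  then show ?thesis using s Zw_set by (auto simp: bwd_def)
qed

lemma betam_H1: "s \<in> set Llabs \<Longrightarrow> betam s \<in> H1"
  unfolding betam_def using bwd_set wmat_H1 by blast

lemma ufun_ok:
  assumes k: "k \<in> {1,2,3,4,5,6}" and x: "x \<in> Vset"
  shows "ufun k x = wmat (bwl ! (k-1)) *v x"
proof -
  have v: "x$5 + x$6 + x$7 - x$1 - x$2 - x$3 - x$4 = 1" using x by (simp add: Vset_def)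
  then have x5: "x$5 = 1 + x$1 + x$2 + x$3 + x$4 - x$6 - x$7" by (simp add: algebra_simps)
  from k consider "k = 1" | "k = 2" | "k = 3" | "k = 4" | "k = 5" | "k = 6" by auto
  then show ?thesis
  proof cases
    case 1 then have kk: "k - 1 = 0" and kv: "k = 1" by simp_all
    show ?thesis unfolding kk unfolding wmat_rows unfolding bw_rows1 unfolding kv by (simp add: vec_eq_iff all7 ufun_def mk7_def Let_def matrix_vector_mult_def sum7 toM_nth x5 algebra_simps)
  next
    case 2 then have kk: "k - 1 = 1" and kv: "k = 2" by simp_all
    show ?thesis unfolding kk unfolding wmat_rows unfolding bw_rows2 unfolding kv by (simp add: vec_eq_iff all7 ufun_def mk7_def Let_def matrix_vector_mult_def sum7 toM_nth x5 algebra_simps)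
  next
    case 3 then have kk: "k - 1 = 2" and kv: "k = 3" by simp_all
    show ?thesis unfolding kk unfolding wmat_rows unfolding bw_rows3 unfolding kv by (simp add: vec_eq_iff all7 ufun_def mk7_def Let_def matrix_vector_mult_def sum7 toM_nth x5 algebra_simps)
  next
    case 4 then have kk: "k - 1 = 3" and kv: "k = 4" by simp_all
    show ?thesis unfolding kk unfolding wmat_rows unfolding bw_rows4 unfolding kv by (simp add: vec_eq_iff all7 ufun_def mk7_def Let_def matrix_vector_mult_def sum7 toM_nth x5 algebra_simps)
  next
    case 5 then have kk: "k - 1 = 4" and kv: "k = 5" by simp_all
    show ?thesis unfolding kk unfolding wmat_rows unfolding bw_rows5 unfolding kv by (simp add: vec_eq_iff all7 ufun_def mk7_def Let_def matrix_vector_mult_def sum7 toM_nth x5 algebra_simps)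
  next
    case 6 then have kk: "k - 1 = 5" and kv: "k = 6" by simp_all
    show ?thesis unfolding kk unfolding wmat_rows unfolding bw_rows6 unfolding kv by (simp add: vec_eq_iff all7 ufun_def mk7_def Let_def matrix_vector_mult_def sum7 toM_nth x5 algebra_simps)
  qed
qed

lemma Zm_wmat: "Zm ** wmat w = wmat (Zw @ w)"
  by (simp add: Zm_def wmat_append)

lemma ulab_ok:
  assumes s: "s \<in> set Llabs" and x: "x \<in> Vset"
  shows "ulab s x = betam s *v x"
proof -
  obtain b k where s0: "s = (b,k)" by (cases s)
  then have k: "k \<in> {1,2,3,4,5,6}" using s Llabs_iff by auto
  show ?thesis
  proof (cases b)
    case True
    have "ulab s x = Zm *v (wmat (bwl ! (k-1)) *v x)"
      using True s0 ufun_ok[OF k x] by (simp add: ulab_def Z1_eq)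
    also have "\<dots> = betam s *v x"
      using True s0 by (simp add: matrix_vector_mul_assoc Zm_wmat betam_def bwd_def)
    finally show ?thesis .
  next
    case False
    then show ?thesis using s0 ufun_ok[OF k x] by (simp add: ulab_def betam_def bwd_def)
  qed
qed

lemma Lcoset_eq: "s \<in> set Llabs \<Longrightarrow> Lcoset s = rcos GL (betam s)"
proof -
  assume s: "s \<in> set Llabs"
  have "(THE \<beta>. \<beta> \<in> H1 \<and> (\<forall>x\<in>Vset. \<beta> *v x = ulab s x)) = betam s"
  proof (rule the_equality)
    show "betam s \<in> H1 \<and> (\<forall>x\<in>Vset. betam s *v x = ulab s x)"
      using betam_H1[OF s] ulab_ok[OF s] by simp
  next
    fix \<beta> assume "\<beta> \<in> H1 \<and> (\<forall>x\<in>Vset. \<beta> *v x = ulab s x)"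
    then have "\<forall>x\<in>Vset. \<beta> *v x = betam s *v x" using ulab_ok[OF s] by simp
    then show "\<beta> = betam s" by (rule mat_V)
  qed
  then show ?thesis unfolding Lcoset_def by simp
qed

definition psil :: "int list" where "psil = [0,0,0,0,-1,1,1]"
definition lvi :: "bool \<times> nat \<Rightarrow> int list" where "lvi s = wract (bwd s) psil"
definition lvZi :: "bool \<times> nat \<Rightarrow> int list" where "lvZi s = wract (Zw @ bwd s) psil"

lemma ract_psi: "n \<in> {0,1,2,4,6} \<Longrightarrow> ract n psil = psil"
  by (auto simp: psil_def)

lemma wract_psi: "set w \<subseteq> {0,1,2,4,6} \<Longrightarrow> wract w psil = psil"
  by (induction w) (simp_all add: ract_psi)

lemma psil_len: "length psil = 7" by (simp add: psil_def)

lemma GL_psi: "g \<in> GL \<Longrightarrow> toV psil v* g = toV psil"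
  unfolding GL_eq using wract_psi wract_ok[OF psil_len] by auto

lemma one_GL: "mat 1 \<in> GL" unfolding GL_def by (rule gen_grp.one)

lemma betam_mem:
  assumes s: "s \<in> set Llabs" shows "betam s \<in> Lcoset s"
proof -
  have "mat 1 ** betam s \<in> rcos GL (betam s)" unfolding rcos_def using one_GL by blast
  then show ?thesis using Lcoset_eq[OF s] by simp
qed

lemma L_psi:
  assumes s: "s \<in> set Llabs" and b: "b \<in> Lcoset s"
  shows "toV psil v* b = toV (lvi s)" and "toV psil v* (Zm ** b) = toV (lvZi s)"
proof -
  obtain g where g: "g \<in> GL" and be: "b = g ** betam s" using b Lcoset_eq[OF s] unfolding rcos_def by blast
  have gH: "g \<in> H1" using g GL_H1 by blast
  show "toV psil v* b = toV (lvi s)"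
    using be GL_psi[OF g] by (simp add: vector_matrix_mul_assoc[symmetric] betam_def lvi_def wract_ok psil_len)
  have "Zm ** b = g ** (Zm ** betam s)" using be Zm_central[OF gH] by (simp add: matrix_mul_assoc)
  then show "toV psil v* (Zm ** b) = toV (lvZi s)"
    using GL_psi[OF g] by (simp add: vector_matrix_mul_assoc[symmetric] betam_def lvZi_def wract_ok psil_len Zm_wmat)
qed

lemma L_chk:
  "list_all (\<lambda>s. list_all (\<lambda>t. (lvi s = lvZi t) = (t = flipl s)) Llabs) Llabs
   \<and> distinct (map lvi Llabs)
   \<and> list_all (\<lambda>s. length (lvi s) = 7 \<and> length (lvZi s) = 7 \<and> flipl s \<in> set Llabs) Llabs
   \<and> list_all (\<lambda>s. list_ex (\<lambda>n. wract (n # bwd s) (unitv 0) \<noteq> wract (bwd s) (unitv 0)) [0,1,2,4,6]) Llabs"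
  by code_simp

lemma Lcoset_notJ:
  assumes s: "s \<in> set Llabs"
  shows "Lcoset s \<notin> Jcosets"
proof
  assume "Lcoset s \<in> Jcosets"
  then obtain \<alpha> where a: "Lcoset s = rcos GJ \<alpha>" unfolding Jcosets_def by blast
  obtain n where n: "n \<in> set [0,1,2,4,6]" and ne: "wract (n # bwd s) (unitv 0) \<noteq> wract (bwd s) (unitv 0)"
    using L_chk s unfolding list_all_iff list_ex_iff by blast
  have gn: "gmat n \<in> GL" using n unfolding GL_eq by (auto intro!: exI[of _ "[n]"])
  have m1: "betam s \<in> rcos GJ \<alpha>" using betam_mem[OF s] a by simp
  have "gmat n ** betam s \<in> Lcoset s" using Lcoset_eq[OF s] gn unfolding rcos_def by blast
  then have m2: "gmat n ** betam s \<in> rcos GJ \<alpha>" using a by simp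
  have "wmat (n # bwd s) $ 1 = wmat (bwd s) $ 1"
    using rcos_GJ_row[OF m1] rcos_GJ_row[OF m2] by (simp add: betam_def)
  then have "toV (wract (n # bwd s) (unitv 0)) = toV (wract (bwd s) (unitv 0))" by (simp only: wmat_row1)
  then have "wract (n # bwd s) (unitv 0) = wract (bwd s) (unitv 0)"
    by (rule toV_inj[rotated 2]) (simp_all add: wract_len unitv_len ract_len)
  with ne show False by simp
qed

lemma lv_len: "s \<in> set Llabs \<Longrightarrow> length (lvi s) = 7 \<and> length (lvZi s) = 7"
  using L_chk unfolding list_all_iff by blast

lemma Lcoset_inj:
  assumes s: "s \<in> set Llabs" and t: "t \<in> set Llabs" and e: "Lcoset s = Lcoset t"
  shows "s = t"
proof -
  have "betam s \<in> Lcoset t" using betam_mem[OF s] e by simp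
  then have "toV (lvi s) = toV (lvi t)" using L_psi(1)[OF t] L_psi(1)[OF s betam_mem[OF s]] by simp
  then have "lvi s = lvi t" using lv_len s t toV_inj by blast
  moreover have "inj_on lvi (set Llabs)" using L_chk distinct_map by blast
  ultimately show ?thesis using s t by (meson inj_onD)
qed

lemma opp_LL:
  assumes s: "s \<in> set Llabs" and t: "t \<in> set Llabs"
  shows "opposite (Lcoset s) (Lcoset t) \<longleftrightarrow> t = flipl s"
proof
  assume "opposite (Lcoset s) (Lcoset t)"
  then obtain a b where a: "a \<in> Lcoset s" and b: "b \<in> Lcoset t" and e: "a = Zm ** b"
    unfolding opposite_def Z1_eq by blast
  have "toV (lvi s) = toV (lvZi t)" using L_psi(1)[OF s a] L_psi(2)[OF t b] e by simp
  then have "lvi s = lvZi t" using lv_len s t toV_inj by blast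
  then show "t = flipl s" using L_chk s t unfolding list_all_iff by blast
next
  assume tf: "t = flipl s"
  obtain b k where s0: "s = (b,k)" by (cases s)
  show "opposite (Lcoset s) (Lcoset t)"
  proof (cases b)
    case True
    then have "betam s = Zm ** betam t" using s0 tf by (simp add: betam_def bwd_def flipl_def Zm_wmat)
    then show ?thesis unfolding opposite_def Z1_eq using betam_mem[OF s] betam_mem[OF t] by blast
  next
    case False
    then have "betam t = Zm ** betam s" using s0 tf by (simp add: betam_def bwd_def flipl_def Zm_wmat)
    then have "betam s = Zm ** betam t" by (simp add: matrix_mul_assoc Zm_sq)
    then show ?thesis unfolding opposite_def Z1_eq using betam_mem[OF s] betam_mem[OF t] by blast
  qed
qed


section \<open>The bilinear form and opposite cosets\<close>

definition Bf :: "vec7 \<Rightarrow> vec7 \<Rightarrow> complex" where "Bf u v = cdot u (Qm *v v)"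

lemma cdot_vm: "cdot (u v* A) y = cdot u ((A::mat7) *v y)"
proof -
  have "cdot (u v* A) y = (\<Sum>j\<in>UNIV. \<Sum>i\<in>UNIV. u$i * A$i$j * y$j)"
    by (simp add: cdot_def vector_matrix_mult_def sum_distrib_right)
  also have "\<dots> = (\<Sum>i\<in>UNIV. \<Sum>j\<in>UNIV. u$i * A$i$j * y$j)" by (rule sum.swap)
  also have "\<dots> = cdot u (A *v y)" by (simp add: cdot_def matrix_vector_mult_def sum_distrib_left mult.assoc)
  finally show ?thesis .
qed

lemma Bf_inv: "\<alpha> \<in> H1 \<Longrightarrow> Bf (u v* \<alpha>) (v v* \<alpha>) = Bf u v"
proof -
  assume a: "\<alpha> \<in> H1"
  have "Bf (u v* \<alpha>) (v v* \<alpha>) = cdot u (\<alpha> *v (Qm *v (transpose \<alpha> *v v)))"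
    by (simp add: Bf_def cdot_vm)
  also have "\<dots> = cdot u ((\<alpha> ** Qm ** transpose \<alpha>) *v v)" by (simp only: matrix_vector_mul_assoc matrix_mul_assoc)
  also have "\<dots> = Bf u v" using H1_Q[OF a] by (simp add: Bf_def)
  finally show ?thesis .
qed

definition ibil :: "int list \<Rightarrow> int list \<Rightarrow> int" where
  "ibil u v = isum (\<lambda>k. u ! k * imv Qi v ! k)"

lemma cdot_toV2: "cdot (toV a) (toV b) = of_int (isum (\<lambda>k. a ! k * b ! k))"
proof -
  have "cdot (toV a) (toV b) = of_int (\<Sum>i\<in>UNIV. a ! pos i * b ! pos i)" by (simp add: cdot_toV toV_nth)
  also have "\<dots> = of_int (isum (\<lambda>k. a ! k * b ! k))"
    using sum_pos[of "\<lambda>k. a ! k * b ! k"] by (simp add: isum_eq)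
  finally show ?thesis .
qed

lemma Bf_toV: "Bf (toV u) (toV v) = of_int (ibil u v)"
  by (simp add: Bf_def Qm_def toM_mv cdot_toV2 ibil_def)

lemma Bf0: "ibil (unitv 0) psil = 0" by code_simp

definition wit :: "(jlab \<times> (bool \<times> nat) \<times> nat list) list" where
  "wit = [((True,0,0),(True,1),[]), ((True,0,0),(True,2),[]), ((True,0,0),(True,3),[]), ((True,0,0),(True,4),[]), ((True,0,0),(True,5),[]), ((True,0,0),(True,6),[]), ((True,0,1),(False,5),[0,1,6,0,4]), ((True,0,1),(False,6),[0,1,6,0]), ((True,0,1),(True,1),[0]), ((True,0,1),(True,2),[0]), ((True,0,1),(True,3),[0]), ((True,0,1),(True,4),[0,6,2,4,6]), ((True,0,2),(False,4),[0,1,6,0,4]), ((True,0,2),(False,6),[0,1,6,0,4]), ((True,0,2),(True,1),[0,1]), ((True,0,2),(True,2),[0,1]), ((True,0,2),(True,3),[0,1]), ((True,0,2),(True,5),[0,6,2,4,6]), ((True,0,3),(False,4),[0,1,6,0]), ((True,0,3),(False,5),[0,1,6,0]), ((True,0,3),(True,1),[0,1,2]), ((True,0,3),(True,2),[0,1,2]), ((True,0,3),(True,3),[0,1,2]), ((True,0,3),(True,6),[0,6,2,4,6]), ((True,1,0),(False,2),[0,1,6,0,4]), ((True,1,0),(False,3),[0,1,6,0,4]), ((True,1,0),(True,1),[0,6,2,4,6]), ((True,1,0),(True,4),[0]), ((True,1,0),(True,5),[0]), ((True,1,0),(True,6),[0]), ((True,1,1),(False,2),[0,1,6,4]), ((True,1,1),(False,3),[0,1,6,4]),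 ((True,1,1),(False,5),[0,1,6,4]), ((True,1,1),(False,6),[0,1,6]), ((True,1,1),(True,1),[0,6,2,4,6,0]), ((True,1,1),(True,4),[0,6,2,4,6,0]), ((True,1,2),(False,2),[0,6,4]), ((True,1,2),(False,3),[0,6,4]), ((True,1,2),(False,4),[0,1,6,4]), ((True,1,2),(False,6),[0,1,6,4]), ((True,1,2),(True,1),[0,1,6,0,4,6,2]), ((True,1,2),(True,5),[0,6,2,4,6,0]), ((True,1,3),(False,2),[0,6,2,4]), ((True,1,3),(False,3),[0,6,2,4]), ((True,1,3),(False,4),[0,1,6]), ((True,1,3),(False,5),[0,1,6]), ((True,1,3),(True,1),[0,1,6,0,4,6]), ((True,1,3),(True,6),[0,6,2,4,6,0]), ((True,2,0),(False,1),[0,1,6,0,4]), ((True,2,0),(False,3),[0,1,6,0]), ((True,2,0),(True,2),[0,6,2,4,6]), ((True,2,0),(True,4),[0,1]), ((True,2,0),(True,5),[0,1]), ((True,2,0),(True,6),[0,1]), ((True,2,1),(False,1),[0,1,6,4]), ((True,2,1),(False,3),[0,1,6]), ((True,2,1),(False,5),[0,6,4]), ((True,2,1),(False,6),[0,6]), ((True,2,1),(True,2),[0,6,2,4,6,0]), ((True,2,1),(True,4),[0,1,6,0,4,6,2]), ((True,2,2),(False,1),[0,6,4]), ((True,2,2),(False,3),[0,6]), ((True,2,2),(False,4),[0,6,4]), ((True,2,2),(False,6),[0,6,4]), ((True,2,2),(True,2),[0,1,6,0,4,6,2]), ((True,2,2),(True,5),[0,1,6,0,4,6,2]), ((True,2,3),(False,1),[0,6,2,4]),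 ((True,2,3),(False,3),[0,6,2]), ((True,2,3),(False,4),[0,6]), ((True,2,3),(False,5),[0,6]), ((True,2,3),(True,2),[0,1,6,0,4,6]), ((True,2,3),(True,6),[0,1,6,0,4,6,2]), ((True,3,0),(False,1),[0,1,6,0]), ((True,3,0),(False,2),[0,1,6,0]), ((True,3,0),(True,3),[0,6,2,4,6]), ((True,3,0),(True,4),[0,1,2]), ((True,3,0),(True,5),[0,1,2]), ((True,3,0),(True,6),[0,1,2]), ((True,3,1),(False,1),[0,1,6]), ((True,3,1),(False,2),[0,1,6]), ((True,3,1),(False,5),[0,6,2,4]), ((True,3,1),(False,6),[0,6,2]), ((True,3,1),(True,3),[0,6,2,4,6,0]), ((True,3,1),(True,4),[0,1,6,0,4,6]), ((True,3,2),(False,1),[0,6]), ((True,3,2),(False,2),[0,6]), ((True,3,2),(False,4),[0,6,2,4]), ((True,3,2),(False,6),[0,6,2,4]), ((True,3,2),(True,3),[0,1,6,0,4,6,2]), ((True,3,2),(True,5),[0,1,6,0,4,6]), ((True,3,3),(False,1),[0,6,2]), ((True,3,3),(False,2),[0,6,2]), ((True,3,3),(False,4),[0,6,2]), ((True,3,3),(False,5),[0,6,2]), ((True,3,3),(True,3),[0,1,6,0,4,6]), ((True,3,3),(True,6),[0,1,6,0,4,6]), ((False,0,0),(False,1),[]), ((False,0,0),(False,2),[]), ((False,0,0),(False,3),[]), ((False,0,0),(False,4),[]), ((False,0,0),(False,5),[]), ((False,0,0),(False,6),[]), ((False,0,1),(False,1),[0]), ((False,0,1),(False,2),[0]), ((False,0,1),(False,3),[0]),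 ((False,0,1),(False,4),[0,6,2,4,6]), ((False,0,1),(True,5),[0,1,6,0,4]), ((False,0,1),(True,6),[0,1,6,0]), ((False,0,2),(False,1),[0,1]), ((False,0,2),(False,2),[0,1]), ((False,0,2),(False,3),[0,1]), ((False,0,2),(False,5),[0,6,2,4,6]), ((False,0,2),(True,4),[0,1,6,0,4]), ((False,0,2),(True,6),[0,1,6,0,4]), ((False,0,3),(False,1),[0,1,2]), ((False,0,3),(False,2),[0,1,2]), ((False,0,3),(False,3),[0,1,2]), ((False,0,3),(False,6),[0,6,2,4,6]), ((False,0,3),(True,4),[0,1,6,0]), ((False,0,3),(True,5),[0,1,6,0]), ((False,1,0),(False,1),[0,6,2,4,6]), ((False,1,0),(False,4),[0]), ((False,1,0),(False,5),[0]), ((False,1,0),(False,6),[0]), ((False,1,0),(True,2),[0,1,6,0,4]), ((False,1,0),(True,3),[0,1,6,0,4]), ((False,1,1),(False,1),[0,6,2,4,6,0]), ((False,1,1),(False,4),[0,6,2,4,6,0]), ((False,1,1),(True,2),[0,1,6,4]), ((False,1,1),(True,3),[0,1,6,4]), ((False,1,1),(True,5),[0,1,6,4]), ((False,1,1),(True,6),[0,1,6]), ((False,1,2),(False,1),[0,1,6,0,4,6,2]), ((False,1,2),(False,5),[0,6,2,4,6,0]), ((False,1,2),(True,2),[0,6,4]), ((False,1,2),(True,3),[0,6,4]), ((False,1,2),(True,4),[0,1,6,4]), ((False,1,2),(True,6),[0,1,6,4]), ((False,1,3),(False,1),[0,1,6,0,4,6]), ((False,1,3),(False,6),[0,6,2,4,6,0]),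 ((False,1,3),(True,2),[0,6,2,4]), ((False,1,3),(True,3),[0,6,2,4]), ((False,1,3),(True,4),[0,1,6]), ((False,1,3),(True,5),[0,1,6]), ((False,2,0),(False,2),[0,6,2,4,6]), ((False,2,0),(False,4),[0,1]), ((False,2,0),(False,5),[0,1]), ((False,2,0),(False,6),[0,1]), ((False,2,0),(True,1),[0,1,6,0,4]), ((False,2,0),(True,3),[0,1,6,0]), ((False,2,1),(False,2),[0,6,2,4,6,0]), ((False,2,1),(False,4),[0,1,6,0,4,6,2]), ((False,2,1),(True,1),[0,1,6,4]), ((False,2,1),(True,3),[0,1,6]), ((False,2,1),(True,5),[0,6,4]), ((False,2,1),(True,6),[0,6]), ((False,2,2),(False,2),[0,1,6,0,4,6,2]), ((False,2,2),(False,5),[0,1,6,0,4,6,2]), ((False,2,2),(True,1),[0,6,4]), ((False,2,2),(True,3),[0,6]), ((False,2,2),(True,4),[0,6,4]), ((False,2,2),(True,6),[0,6,4]), ((False,2,3),(False,2),[0,1,6,0,4,6]), ((False,2,3),(False,6),[0,1,6,0,4,6,2]), ((False,2,3),(True,1),[0,6,2,4]), ((False,2,3),(True,3),[0,6,2]), ((False,2,3),(True,4),[0,6]), ((False,2,3),(True,5),[0,6]), ((False,3,0),(False,3),[0,6,2,4,6]), ((False,3,0),(False,4),[0,1,2]), ((False,3,0),(False,5),[0,1,2]), ((False,3,0),(False,6),[0,1,2]), ((False,3,0),(True,1),[0,1,6,0]), ((False,3,0),(True,2),[0,1,6,0]), ((False,3,1),(False,3),[0,6,2,4,6,0]), ((False,3,1),(False,4),[0,1,6,0,4,6]),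 ((False,3,1),(True,1),[0,1,6]), ((False,3,1),(True,2),[0,1,6]), ((False,3,1),(True,5),[0,6,2,4]), ((False,3,1),(True,6),[0,6,2]), ((False,3,2),(False,3),[0,1,6,0,4,6,2]), ((False,3,2),(False,5),[0,1,6,0,4,6]), ((False,3,2),(True,1),[0,6]), ((False,3,2),(True,2),[0,6]), ((False,3,2),(True,4),[0,6,2,4]), ((False,3,2),(True,6),[0,6,2,4]), ((False,3,3),(False,3),[0,1,6,0,4,6]), ((False,3,3),(False,6),[0,1,6,0,4,6]), ((False,3,3),(True,1),[0,6,2]), ((False,3,3),(True,2),[0,6,2]), ((False,3,3),(True,4),[0,6,2]), ((False,3,3),(True,5),[0,6,2])]"

definition vJtab :: "int list list" where "vJtab = [[1,0,0,0,0,0,0],[0,-1,-1,-1,0,1,1],[0,-1,-1,-1,1,0,1],[0,-1,-1,-1,1,1,0],[0,1,0,0,0,0,0],[-1,0,-1,-1,0,1,1],[-1,0,-1,-1,1,0,1],[-1,0,-1,-1,1,1,0],[0,0,1,0,0,0,0],[-1,-1,0,-1,0,1,1],[-1,-1,0,-1,1,0,1],[-1,-1,0,-1,1,1,0],[0,0,0,1,0,0,0],[-1,-1,-1,0,0,1,1],[-1,-1,-1,0,1,0,1],[-1,-1,-1,0,1,1,0],[-2,-1,-1,-1,1,1,1],[-1,0,0,0,1,0,0],[-1,0,0,0,0,1,0],[-1,0,0,0,0,0,1],[-1,-2,-1,-1,1,1,1],[0,-1,0,0,1,0,0],[0,-1,0,0,0,1,0],[0,-1,0,0,0,0,1],[-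1,-1,-2,-1,1,1,1],[0,0,-1,0,1,0,0],[0,0,-1,0,0,1,0],[0,0,-1,0,0,0,1],[-1,-1,-1,-2,1,1,1],[0,0,0,-1,1,0,0],[0,0,0,-1,0,1,0],[0,0,0,-1,0,0,1]]"

definition lZtab :: "int list list" where "lZtab = [[-2,-2,0,0,1,1,1],[-2,0,-2,0,1,1,1],[-2,0,0,-2,1,1,1],[-2,-2,-2,-2,3,1,1],[-2,-2,-2,-2,1,3,1],[-2,-2,-2,-2,1,1,3],[0,0,-2,-2,1,1,1],[0,-2,0,-2,1,1,1],[0,-2,-2,0,1,1,1],[0,0,0,0,-1,1,1],[0,0,0,0,1,-1,1],[0,0,0,0,1,1,-1]]"

definition witkeys :: "(jlab \<times> bool \<times> nat) list" where "witkeys = map (\<lambda>(l,s,w). (l,s)) wit"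

lemma W_chk: "list_all (\<lambda>(l,s,w). l \<in> set jlabs \<and> s \<in> set Llabs \<and> set w \<subseteq> {0,1,2,4,6} \<and>
     wract (Zw @ w @ bwd s) (unitv 0) = vecJ l) wit"
  by code_simp

fun ibl :: "int list \<Rightarrow> int list \<Rightarrow> int" where
  "ibl [a1,a2,a3,a4,a5,a6,a7] [b1,b2,b3,b4,b5,b6,b7] =
     - (a1*b1) - a2*b2 - a3*b3 - a4*b4 + a5*(b6+b7) + a6*(b5+b7) + a7*(b5+b6)"
| "ibl _ _ = 0"

lemma ibl_eq:
  assumes "length u = 7" "length v = 7" shows "ibil u v = ibl u v"
proof -
  obtain a1 a2 a3 a4 a5 a6 a7 where u: "u = [a1,a2,a3,a4,a5,a6,a7]" using len7[OF assms(1)] by blast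
  obtain b1 b2 b3 b4 b5 b6 b7 where v: "v = [b1,b2,b3,b4,b5,b6,b7]" using len7[OF assms(2)] by blast
  show ?thesis unfolding u v
    by (simp add: ibil_def isum_def imv_def Qi_def upt_rec eval_nat_numeral algebra_simps)
qed

lemma vJtab_eq: "map vecJ jlabs = vJtab" by code_simp
lemma lZtab_eq: "map lvZi Llabs = lZtab" by code_simp

definition pairsZ :: "((jlab \<times> bool \<times> nat) \<times> int) list" where
  "pairsZ = concat (map (\<lambda>(l,v). map (\<lambda>(s,z). ((l,s), ibl v z)) (zip Llabs lZtab)) (zip jlabs vJtab))"

lemma N_chk: "map fst (filter (\<lambda>(_,c). c = 0) pairsZ) = witkeys" by code_simp

lemma zip_map_self: "zip xs (map f xs) = map (\<lambda>x. (x, f x)) xs"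
  by (induction xs) auto

lemma pairsZ_mem: "l \<in> set jlabs \<Longrightarrow> s \<in> set Llabs \<Longrightarrow> ((l,s), ibl (vecJ l) (lvZi s)) \<in> set pairsZ"
  unfolding pairsZ_def vJtab_eq[symmetric] lZtab_eq[symmetric] zip_map_self by auto

lemma N_key: "l \<in> set jlabs \<Longrightarrow> s \<in> set Llabs \<Longrightarrow> ibl (vecJ l) (lvZi s) = 0 \<Longrightarrow> (l,s) \<in> set witkeys"
proof -
  assume a: "l \<in> set jlabs" "s \<in> set Llabs" "ibl (vecJ l) (lvZi s) = 0"
  then have "((l,s), 0) \<in> set (filter (\<lambda>(_,c). c = 0) pairsZ)" using pairsZ_mem[OF a(1,2)] by simp
  then have "(l,s) \<in> set (map fst (filter (\<lambda>(_,c). c = 0) pairsZ))" by force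
  then show ?thesis using N_chk by simp
qed

lemma opp_JL:
  assumes l: "valid_jlab l" and s: "s \<in> set Llabs"
  shows "opposite (Jcoset l) (Lcoset s) \<longleftrightarrow> (l,s) \<in> set witkeys"
proof
  assume k: "(l,s) \<in> set witkeys"
  then obtain w where lw: "(l,s,w) \<in> set wit" unfolding witkeys_def by auto
  then have c: "set w \<subseteq> {0,1,2,4,6}" "wract (Zw @ w @ bwd s) (unitv 0) = vecJ l"
    using W_chk unfolding list_all_iff by auto
  define b where "b = wmat w ** betam s"
  have gw: "wmat w \<in> GL" using c(1) unfolding GL_eq by blast
  have bL: "b \<in> Lcoset s" using Lcoset_eq[OF s] gw unfolding rcos_def b_def by blast
  have "Zm ** b = (Zm ** wmat w) ** wmat (bwd s)" by (simp only: b_def betam_def matrix_mul_assoc)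
  also have "\<dots> = wmat (Zw @ w) ** wmat (bwd s)" by (simp only: Zm_wmat)
  also have "\<dots> = wmat (Zw @ w @ bwd s)" by (simp only: wmat_append matrix_mul_assoc append_assoc)
  finally have ae: "Zm ** b = wmat (Zw @ w @ bwd s)" .
  have s1: "set Zw \<subseteq> {0,1,2,3,4,5,6}" using Zw_set by blast
  have s2: "set w \<subseteq> {0,1,2,3,4,5,6}" using c(1) by blast
  have s3: "set (bwd s) \<subseteq> {0,1,2,3,4,5,6}" using bwd_set[OF s] by blast
  have "set (Zw @ w @ bwd s) \<subseteq> {0,1,2,3,4,5,6}" using s1 s2 s3 by (simp only: set_append Un_subset_iff)
  then have aH: "Zm ** b \<in> H1" unfolding ae by (rule wmat_H1)
  have "(Zm ** b) $ 1 = toV (vecJ l)" using ae c(2) by (simp add: wmat_row1)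
  then have "Zm ** b \<in> Jcoset l" using Jcoset_eq[OF l] aH by blast
  then show "opposite (Jcoset l) (Lcoset s)" unfolding opposite_def Z1_eq using bL by blast
next
  assume "opposite (Jcoset l) (Lcoset s)"
  then obtain a b where a: "a \<in> Jcoset l" and b: "b \<in> Lcoset s" and e: "a = Zm ** b"
    unfolding opposite_def Z1_eq by blast
  have aH: "a \<in> H1" and ar: "a $ 1 = toV (vecJ l)" using a Jcoset_eq[OF l] by auto
  have "Bf (e1v v* a) (toV psil v* a) = Bf e1v (toV psil)" by (rule Bf_inv[OF aH])
  also have "\<dots> = 0" unfolding e1v_def Bf_toV Bf0 by simp
  finally have "Bf (e1v v* a) (toV psil v* a) = 0" .
  moreover have "e1v v* a = toV (vecJ l)" using ar by (simp add: e1v_def row1_eq)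
  moreover have "toV psil v* a = toV (lvZi s)" using L_psi(2)[OF s b] e by simp
  ultimately have "of_int (ibil (vecJ l) (lvZi s)) = (0::complex)" by (simp add: Bf_toV)
  then have "ibil (vecJ l) (lvZi s) = 0" by simp
  then have "ibl (vecJ l) (lvZi s) = 0" using ibl_eq vecJ_len[OF l] lv_len[OF s] by simp
  moreover have "l \<in> set jlabs" using l valid_iff by blast
  ultimately show "(l,s) \<in> set witkeys" using N_key s by blast
qed

lemma opp_sym: "opposite X Y \<Longrightarrow> opposite Y X"
proof -
  assume "opposite X Y"
  then obtain a b where "a \<in> X" "b \<in> Y" "a = Zm ** b" unfolding opposite_def Z1_eq by blast
  moreover then have "b = Zm ** a" by (simp add: matrix_mul_assoc Zm_sq)
  ultimately show ?thesis unfolding opposite_def Z1_eq by blast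
qed

lemma hamming_self: "hamming s s = 0"
  by (induction s) (simp_all add: hamming_def)

lemma dT_JJ:
  assumes "valid_jlab l1" "valid_jlab l2"
  shows "dT (Jcoset l1) (Jcoset l2) = hamming (jstring l1) (jstring l2)"
proof (cases "Jcoset l1 = Jcoset l2")
  case True
  then have "l1 = l2" using Jcoset_inj assms by blast
  then show ?thesis using True by (simp add: dT_def hamming_self)
next
  case False
  then show ?thesis using assms Jcoset_in jstr_of_J by (simp add: dT_def)
qed

lemma dT_LL:
  assumes s: "s \<in> set Llabs" and t: "t \<in> set Llabs"
  shows "dT (Lcoset s) (Lcoset t) = (if s = t then 0 else if t = flipl s then 4 else 2)"
proof (cases "s = t")
  case True then show ?thesis by (simp add: dT_def)
next
  case False
  then have "Lcoset s \<noteq> Lcoset t" using Lcoset_inj s t by blast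
  then show ?thesis using False Lcoset_notJ[OF s] opp_LL[OF s t] by (simp add: dT_def)
qed

lemma dT_JL:
  assumes l: "valid_jlab l" and s: "s \<in> set Llabs"
  shows "dT (Jcoset l) (Lcoset s) = (if (l,s) \<in> set witkeys then 4 else 2)"
proof -
  have "Jcoset l \<noteq> Lcoset s" using Jcoset_in[OF l] Lcoset_notJ[OF s] by auto
  then show ?thesis using Lcoset_notJ[OF s] opp_JL[OF l s] by (simp add: dT_def)
qed

lemma dT_LJ:
  assumes l: "valid_jlab l" and s: "s \<in> set Llabs"
  shows "dT (Lcoset s) (Jcoset l) = (if (l,s) \<in> set witkeys then 4 else 2)"
proof -
  have "Jcoset l \<noteq> Lcoset s" using Jcoset_in[OF l] Lcoset_notJ[OF s] by auto
  moreover have "opposite (Lcoset s) (Jcoset l) \<longleftrightarrow> opposite (Jcoset l) (Lcoset s)" using opp_sym by blast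
  ultimately show ?thesis using Lcoset_notJ[OF s] opp_JL[OF l s] by (simp add: dT_def)
qed


section \<open>gamma1 and the final computation\<close>

lemma opp_ibl:
  assumes l: "valid_jlab l" and s: "s \<in> set Llabs" and o: "opposite (Jcoset l) (Lcoset s)"
  shows "ibl (vecJ l) (lvZi s) = 0"
proof -
  obtain a b where a: "a \<in> Jcoset l" and b: "b \<in> Lcoset s" and e: "a = Zm ** b"
    using o unfolding opposite_def Z1_eq by blast
  have aH: "a \<in> H1" and ar: "a $ 1 = toV (vecJ l)" using a Jcoset_eq[OF l] by auto
  have "Bf (e1v v* a) (toV psil v* a) = Bf e1v (toV psil)" by (rule Bf_inv[OF aH])
  also have "\<dots> = 0" unfolding e1v_def Bf_toV Bf0 by simp
  finally have "Bf (e1v v* a) (toV psil v* a) = 0" .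
  moreover have "e1v v* a = toV (vecJ l)" using ar by (simp add: e1v_def row1_eq)
  moreover have "toV psil v* a = toV (lvZi s)" using L_psi(2)[OF s b] e by simp
  ultimately have "of_int (ibil (vecJ l) (lvZi s)) = (0::complex)" by (simp add: Bf_toV)
  then have "ibil (vecJ l) (lvZi s) = 0" by simp
  then show ?thesis using ibl_eq vecJ_len[OF l] lv_len[OF s] by simp
qed

lemma opp_JL_ibl:
  assumes l: "valid_jlab l" and s: "s \<in> set Llabs"
  shows "opposite (Jcoset l) (Lcoset s) \<longleftrightarrow> ibl (vecJ l) (lvZi s) = 0"
  using opp_ibl[OF l s] opp_JL[OF l s] N_key[OF _ s] l valid_iff by blast

definition strlab :: "bool list \<Rightarrow> jlab" where
  "strlab str = (case find (\<lambda>l. jstring l = str) jlabs of Some l \<Rightarrow> l | None \<Rightarrow> (True,0,0))"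

definition jstrv :: "cidx \<Rightarrow> bool list" where
  "jstrv v = (case v of (s,i,j) \<Rightarrow> if i = 0 \<and> j = 1 then replicate 6 s
      else map (\<lambda>p. if p = i - 1 \<or> p = j - 1 then s else \<not> s) [1..<7])"

definition glab :: "cidx \<Rightarrow> jlab + (bool \<times> nat)" where
  "glab v = (case v of (s,i,j) \<Rightarrow> if i = 0 \<and> j = 1 then Inl (strlab (jstrv v))
      else if i \<le> 1 then Inr (if s then (False, j-1) else (True, j-1)) else Inl (strlab (jstrv v)))"

definition cosL :: "jlab + (bool \<times> nat) \<Rightarrow> mat7 set" where
  "cosL x = (case x of Inl l \<Rightarrow> Jcoset l | Inr s \<Rightarrow> Lcoset s)"

definition labok :: "jlab + (bool \<times> nat) \<Rightarrow> bool" where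
  "labok x = (case x of Inl l \<Rightarrow> l \<in> set jlabs | Inr s \<Rightarrow> s \<in> set Llabs)"

definition list56 :: "cidx list" where
  "list56 = [(s,i,j). s \<leftarrow> [True,False], j \<leftarrow> [0..<8], i \<leftarrow> [0..<j]]"

lemma list56_set: "set list56 = cosets56"
proof -
  have "(s,i,j) \<in> set list56 \<longleftrightarrow> (s,i,j) \<in> cosets56" for s i j
    by (cases s) (force simp: list56_def cosets56_def image_iff)+
  then show ?thesis by auto
qed

lemma jstring_chk: "distinct (map jstring jlabs)" by code_simp

lemma G_chk: "list_all (\<lambda>v. labok (glab v) \<and>
    (case v of (s,i,j) \<Rightarrow> (i = 0 \<and> j = 1 \<or> 2 \<le> i) \<longrightarrow> jstring (strlab (jstrv v)) = jstrv v)) list56"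
  by code_simp

lemma the_lab:
  assumes l: "l \<in> set jlabs" and e: "jstring l = str"
  shows "(THE l. valid_jlab l \<and> jstring l = str) = l"
proof (rule the_equality)
  show "valid_jlab l \<and> jstring l = str" using l e valid_iff by blast
next
  fix l' assume "valid_jlab l' \<and> jstring l' = str"
  then have "l' \<in> set jlabs" "jstring l' = jstring l" using e valid_iff by auto
  moreover have "inj_on jstring (set jlabs)" using jstring_chk distinct_map by blast
  ultimately show "l' = l" using l by (meson inj_onD)
qed

lemma glab_ok: "v \<in> set list56 \<Longrightarrow> labok (glab v)"
  using G_chk unfolding list_all_iff by blast

lemma gamma1_cosL:
  assumes v: "v \<in> set list56"
  shows "gamma1 v = cosL (glab v)"
proof -
  obtain s i j where vs: "v = (s,i,j)" by (cases v)
  have ok: "labok (glab v)" using glab_ok[OF v] .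
  have js: "(i = 0 \<and> j = 1 \<or> 2 \<le> i) \<longrightarrow> jstring (strlab (jstrv v)) = jstrv v"
    using G_chk v vs unfolding list_all_iff by fastforce
  show ?thesis
  proof (cases "i = 0 \<and> j = 1")
    case True
    then have g: "glab v = Inl (strlab (jstrv v))" by (simp add: glab_def vs)
    then have "strlab (jstrv v) \<in> set jlabs" using ok by (simp add: labok_def)
    moreover have "jstrv v = replicate 6 s" using True by (simp add: jstrv_def vs)
    ultimately show ?thesis using js True the_lab g
      by (simp add: gamma1_def vs Jcoset_of_string_def cosL_def)
  next
    case False
    show ?thesis
    proof (cases "i \<le> 1")
      case True
      have e: "(s \<and> i = 0 \<or> s \<and> i = 1) = s" using True by auto
      have g1: "gamma1 v = (if (s \<and> i = 0) \<or> (s \<and> i = 1) then Lcoset (False, j-1) else Lcoset (True, j-1))"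
        unfolding gamma1_def vs by (simp only: prod.case if_not_P[OF False] if_P[OF True])
      have g2: "glab v = Inr (if s then (False, j-1) else (True, j-1))"
        unfolding glab_def vs by (simp only: prod.case if_not_P[OF False] if_P[OF True])
      show ?thesis unfolding g1 g2 e by (cases s) (simp_all add: cosL_def)
    next
      case F2: False
      then have g: "glab v = Inl (strlab (jstrv v))" using False by (simp add: glab_def vs)
      then have "strlab (jstrv v) \<in> set jlabs" using ok by (simp add: labok_def)
      moreover have "jstrv v = map (\<lambda>p. if p = i - 1 \<or> p = j - 1 then s else \<not> s) [1..<7]"
        unfolding jstrv_def vs by (simp only: prod.case if_not_P[OF False])
      ultimately show ?thesis using js False F2 the_lab g
        by (simp add: gamma1_def vs Jcoset_of_string_def cosL_def)
    qed
  qed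
qed

definition dat :: "jlab + (bool \<times> nat) \<Rightarrow> int list" where
  "dat x = (case x of Inl l \<Rightarrow> vecJ l | Inr s \<Rightarrow> lvZi s)"

definition dlab :: "jlab + (bool \<times> nat) \<Rightarrow> int list \<Rightarrow> jlab + (bool \<times> nat) \<Rightarrow> int list \<Rightarrow> nat" where
  "dlab x p y q = (case x of
     Inl a \<Rightarrow> (case y of Inl b \<Rightarrow> hamming (jstring a) (jstring b) | Inr b \<Rightarrow> if ibl p q = 0 then 4 else 2)
   | Inr a \<Rightarrow> (case y of Inl b \<Rightarrow> if ibl q p = 0 then 4 else 2
                        | Inr b \<Rightarrow> if a = b then 0 else if b = flipl a then 4 else 2))"

lemma dT_dlab:
  assumes x: "labok x" and y: "labok y"
  shows "dT (cosL x) (cosL y) = dlab x (dat x) y (dat y)"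
proof (cases x)
  case (Inl a)
  then have a: "valid_jlab a" using x valid_iff by (simp add: labok_def)
  show ?thesis
  proof (cases y)
    case (Inl b)
    then have "valid_jlab b" using y valid_iff by (simp add: labok_def)
    then show ?thesis using \<open>x = Inl a\<close> Inl a dT_JJ by (simp add: cosL_def dlab_def)
  next
    case (Inr b)
    then have b: "b \<in> set Llabs" using y by (simp add: labok_def)
    show ?thesis using \<open>x = Inl a\<close> Inr dT_JL[OF a b] opp_JL_ibl[OF a b] opp_JL[OF a b]
      by (simp add: cosL_def dlab_def dat_def)
  qed
next
  case (Inr a)
  then have a: "a \<in> set Llabs" using x by (simp add: labok_def)
  show ?thesis
  proof (cases y)
    case (Inl b)
    then have b: "valid_jlab b" using y valid_iff by (simp add: labok_def)
    show ?thesis using \<open>x = Inr a\<close> Inl dT_LJ[OF b a] opp_JL_ibl[OF b a] opp_JL[OF b a]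
      by (simp add: cosL_def dlab_def dat_def)
  next
    case (Inr b)
    then have b: "b \<in> set Llabs" using y by (simp add: labok_def)
    show ?thesis using \<open>x = Inr a\<close> Inr dT_LL[OF a b] by (simp add: cosL_def dlab_def)
  qed
qed

definition o1b :: "cidx \<Rightarrow> bool" where
  "o1b v = (case v of (s,i,j) \<Rightarrow> ((s \<and> i = 0) \<or> (\<not> s \<and> i = 1)) \<and> 2 \<le> j \<and> j \<le> 7)"
definition o2b :: "cidx \<Rightarrow> bool" where
  "o2b v = (case v of (s,i,j) \<Rightarrow> ((s \<and> i = 1) \<or> (\<not> s \<and> i = 0)) \<and> 2 \<le> j \<and> j \<le> 7)"

lemma O1_iff: "v \<in> O1 \<longleftrightarrow> o1b v"
  by (cases v) (auto simp: O1_def o1b_def)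
lemma O2_iff: "v \<in> O2 \<longleftrightarrow> o2b v"
  by (cases v) (auto simp: O2_def o2b_def)

definition sqd :: "int list \<Rightarrow> int list \<Rightarrow> int" where
  "sqd a b = sum_list (map (\<lambda>(x,y). (x - y)^2) (zip a b))"

definition tabf :: "cidx \<Rightarrow> (jlab + (bool \<times> nat)) \<times> int list \<times> int list \<times> bool \<times> bool" where
  "tabf v = (glab v, dat (glab v), map (cvec v) [0..<8], o1b v, o2b v)"

definition TT where "TT = map tabf list56"

lemma final_chk: "list_all (\<lambda>(x,p,c,a1,a2). list_all (\<lambda>(y,q,d,b1,b2).
    16 * int (dlab x p y q) = sqd c d - (if (a1 \<and> b2) \<or> (a2 \<and> b1) then 32 else 0)) TT) TT"
  by code_simp


lemma sqd_map: "sqd (map f xs) (map g xs) = sum_list (map (\<lambda>k. (f k - g k)^2) xs)"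
  by (induction xs) (simp_all add: sqd_def)

theorem proposition6p5:
  assumes "v \<in> cosets56" and "w \<in> cosets56"
  shows "real (dT (gamma1 v) (gamma1 w)) =
           (if (v \<in> O1 \<and> w \<in> O2) \<or> (v \<in> O2 \<and> w \<in> O1) then dd v w - 2 else dd v w)"
proof -
  have v: "v \<in> set list56" and w: "w \<in> set list56" using assms list56_set by auto
  have tv: "tabf v \<in> set TT" and tw: "tabf w \<in> set TT" using v w by (auto simp: TT_def)
  note h1 = bspec[OF final_chk[unfolded list_all_iff] tv]
  note h2 = h1[unfolded tabf_def prod.case]
  note h3 = bspec[OF h2[unfolded list_all_iff] tw]
  note h4 = h3[unfolded tabf_def prod.case]
  define S where "S = (\<Sum>k<8. (cvec v k - cvec w k)^2)"
  define C :: int where "C = (if (o1b v \<and> o2b w) \<or> (o2b v \<and> o1b w) then 32 else 0)"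
  define D where "D = dlab (glab v) (dat (glab v)) (glab w) (dat (glab w))"
  have sq: "sqd (map (cvec v) [0..<8]) (map (cvec w) [0..<8]) = S"
    unfolding S_def sqd_map by (simp only: sum_set_upt_conv_sum_list_nat[symmetric] set_upt atLeast0LessThan)
  have c: "16 * int D = S - C" using h4 unfolding D_def C_def sq .
  have d: "dT (gamma1 v) (gamma1 w) = D"
    using gamma1_cosL[OF v] gamma1_cosL[OF w] dT_dlab glab_ok[OF v] glab_ok[OF w] by (simp add: D_def)
  have dd: "dd v w = real_of_int S / 16"
    by (simp add: dd_def S_def)
  have "real_of_int (16 * int D) = real_of_int (S - C)" using c by simp
  then have r: "real D = (real_of_int S - real_of_int C) / 16" by simp
  show ?thesis unfolding d r dd O1_iff O2_iff C_def by simp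
qed


end
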